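(* Let $p$ be a prime, $d_A=p$, and let $P_{XZ}$ and $\tilde P_{XZ}$ be probability distributions on $\mathbb{F}_p^2$. Let $|\Psi\rangle_{ABE}:=\sum_{(x,z)\in\mathbb{F}_p^2}\sqrt{P_{XZ}(x,z)}\,(\mathbf{W}(x,z)_A\otimes I_B)|\Phi\rangle_{AB}\otimes|x,z\rangle_E$ and $\omega_{ABE}:=(\Lambda[\tilde P'_{XZ}]_B)(|\Psi\rangle\langle\Psi|)$, where $\tilde P'_{XZ}(x,z):=\tilde P_{XZ}(-x,z)$ and $\Lambda[\tilde P'_{XZ}]_B$ is the generalized Pauli channel with distribution $\tilde P'_{XZ}$ acting on $\mathcal{H}_B$ only. Then \begin{align*} H(A|B)_\omega&=H(\tilde P_{XZ}*P_{XZ})-\log d_A,\\ H(A|E)_\omega&=\log d_A-H(P_{XZ}), \end{align*} and for every $t\in(0,1)$, \begin{align*} \tilde H^{\downarrow}_{1-t}(A|B)_\omega&=H_{1-t}(\tilde P_{XZ}*P_{XZ})-\log d_A,\\ \tilde H^{\uparrow}_{1+t}(A|E)_\omega&\ge \log d_A-H_{\frac{1}{1+t}}(P_{XZ}). \end{align*}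
   Context: All logarithms are base 2. $\mathcal{H}_A,\mathcal{H}_B$ are $p$-dimensional with orthonormal basis $\{|j\rangle\}_{j\in\mathbb{F}_p}$; $\mathcal{H}_E$ is $p^2$-dimensional with orthonormal basis $\{|x,z\rangle\}_{(x,z)\in\mathbb{F}_p^2}$. $\omega_p=e^{2\pi i/p}$, $\mathbf{X}=\sum_{j\in\mathbb{F}_p}|j+1\rangle\langle j|$, $\mathbf{Z}=\sum_{j}\omega_p^{j}|j\rangle\langle j|$, $\mathbf{W}(x,z)=\mathbf{X}^x\mathbf{Z}^z$. $|\Phi\rangle_{AB}=\frac{1}{\sqrt p}\sum_j|j\rangle_A|j\rangle_B$. For a distribution $Q$ on $\mathbb{F}_p^2$, the generalized Pauli channel is $\Lambda[Q](\rho)=\sum_{(x,z)}Q(x,z)\mathbf{W}(x,z)\rho\mathbf{W}(x,z)^\dagger$. The convolution is $(\tilde P_{XZ}*P_{XZ})(x,z)=\sum_{x',z'}\tilde P_{XZ}(x',z')P_{XZ}(x-x',z-z')$. $H(Q)$ is the Shannon entropy and, for $s\in(-1,\infty)\setminus\{0\}$, $H_{1+s}(Q):=-\frac1s\log\sum_{v}Q(v)^{1+s}$ (Rényi entropy of order $1+s$). For states: $H(A|B)_\omega=H(\omega_{AB})-H(\omega_B)$ with von Neumann entropy $H$. The sandwiched Rényi divergence is $\tilde D_{1+s}(\rho\|\sigma)=\frac1s\log\mathrm{Tr}\big(\sigma^{-\frac{s}{2(1+s)}}\rho\,\sigma^{-\frac{s}{2(1+s)}}\big)^{1+s}$; $\tilde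 H^{\downarrow}_{1+s}(A|B)_\omega:=-\tilde D_{1+s}(\omega_{AB}\|I_A\otimes\omega_B)$ and $\tilde H^{\uparrow}_{1+s}(A|E)_\omega:=-\inf_{\sigma_E}\tilde D_{1+s}(\omega_{AE}\|I_A\otimes\sigma_E)$, the infimum over density operators on $\mathcal{H}_E$. *)

theory Defs
  imports "HOL-Analysis.Analysis" "Jordan_Normal_Form.Matrix"
begin

text \<open>Operators are JNF complex matrices; kets are column matrices.
  Composite systems use the standard Kronecker ordering: the basis vector
  |i>|j> of C^m (x) C^n has index i*n+j.\<close>

definition mtrace :: "complex mat \<Rightarrow> complex" where
  "mtrace M = (\<Sum>i<dim_row M. M $$ (i, i))"

definition adj :: "complex mat \<Rightarrow> complex mat" where
  "adj M = mat (dim_col M) (dim_row M) (\<lambda>(i, j). cnj (M $$ (j, i)))"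

definition kron :: "complex mat \<Rightarrow> complex mat \<Rightarrow> complex mat" where
  "kron A B = mat (dim_row A * dim_row B) (dim_col A * dim_col B)
     (\<lambda>(i, j). A $$ (i div dim_row B, j div dim_col B) * B $$ (i mod dim_row B, j mod dim_col B))"

definition msum :: "nat \<Rightarrow> nat \<Rightarrow> ('i \<Rightarrow> complex mat) \<Rightarrow> 'i set \<Rightarrow> complex mat" where
  "msum n m f S = mat n m (\<lambda>ij. \<Sum>k\<in>S. f k $$ ij)"

definition ket :: "nat \<Rightarrow> nat \<Rightarrow> complex mat" where
  "ket n k = mat n 1 (\<lambda>(i, _). if i = k then 1 else 0)"

definition ptrace_first :: "nat \<Rightarrow> nat \<Rightarrow> complex mat \<Rightarrow> complex mat" where
  "ptrace_first d1 d2 M = mat d2 d2 (\<lambda>(i, j). \<Sum>k<d1. M $$ (k * d2 + i, k * d2 + j))"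

definition ptrace_second :: "nat \<Rightarrow> nat \<Rightarrow> complex mat \<Rightarrow> complex mat" where
  "ptrace_second d1 d2 M = mat d1 d1 (\<lambda>(i, j). \<Sum>k<d2. M $$ (i * d2 + k, j * d2 + k))"

definition ptrace_mid :: "nat \<Rightarrow> nat \<Rightarrow> nat \<Rightarrow> complex mat \<Rightarrow> complex mat" where
  "ptrace_mid d1 d2 d3 M = mat (d1 * d3) (d1 * d3) (\<lambda>(i, j).
     \<Sum>k<d2. M $$ ((i div d3) * (d2 * d3) + k * d3 + i mod d3,
                   (j div d3) * (d2 * d3) + k * d3 + j mod d3))"

definition unitary_mat :: "nat \<Rightarrow> complex mat \<Rightarrow> bool" where
  "unitary_mat n U \<longleftrightarrow> U \<in> carrier_mat n n \<and> U * adj U = 1\<^sub>m n \<and> adj U * U = 1\<^sub>m n"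

definition rdiag :: "nat \<Rightarrow> (nat \<Rightarrow> real) \<Rightarrow> complex mat" where
  "rdiag n l = mat n n (\<lambda>(i, j). if i = j then complex_of_real (l i) else 0)"

definition spec_decomp :: "complex mat \<Rightarrow> complex mat \<Rightarrow> (nat \<Rightarrow> real) \<Rightarrow> bool" where
  "spec_decomp M U l \<longleftrightarrow> dim_row M = dim_col M \<and> unitary_mat (dim_row M) U
      \<and> M = U * rdiag (dim_row M) l * adj U"

text \<open>Functional calculus for Hermitian matrices: f(M) = U diag(f(l)) U^dagger
  (independent of the chosen spectral decomposition).\<close>
definition mat_fun :: "(real \<Rightarrow> real) \<Rightarrow> complex mat \<Rightarrow> complex mat" where
  "mat_fun f M = (let (U, l) = (SOME (U, l). spec_decomp M U l)
                  in U * rdiag (dim_row M) (\<lambda>i. f (l i)) * adj U)"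

definition hermitian :: "complex mat \<Rightarrow> bool" where
  "hermitian M \<longleftrightarrow> M \<in> carrier_mat (dim_row M) (dim_row M) \<and> adj M = M"

definition psd :: "complex mat \<Rightarrow> bool" where
  "psd M \<longleftrightarrow> hermitian M \<and>
     (\<forall>v \<in> carrier_vec (dim_row M). 0 \<le> Re (\<Sum>i<dim_row M. cnj (v $ i) * (M *\<^sub>v v) $ i))"

definition density_op :: "nat \<Rightarrow> complex mat \<Rightarrow> bool" where
  "density_op n \<sigma> \<longleftrightarrow> \<sigma> \<in> carrier_mat n n \<and> psd \<sigma> \<and> mtrace \<sigma> = 1"

text \<open>von Neumann entropy -Tr(rho log rho) (base 2; note log 2 0 = 0 in Isabelle,
  which realises the convention 0 log 0 = 0).\<close>
definition vN_entropy :: "complex mat \<Rightarrow> real" where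
  "vN_entropy \<rho> = Re (mtrace (mat_fun (\<lambda>x. - (x * log 2 x)) \<rho>))"

definition supp_le :: "complex mat \<Rightarrow> complex mat \<Rightarrow> bool" where
  "supp_le \<rho> \<sigma> \<longleftrightarrow> (\<forall>v \<in> carrier_vec (dim_row \<sigma>).
      \<sigma> *\<^sub>v v = 0\<^sub>v (dim_row \<sigma>) \<longrightarrow> \<rho> *\<^sub>v v = 0\<^sub>v (dim_row \<rho>))"

text \<open>Sandwiched Renyi divergence of order 1+s, s \<in> (-1,\<infinity>)\<setminus>{0}.
  Negative powers of sigma are taken on its support (0 powr a = 0).\<close>
definition sand_div :: "real \<Rightarrow> complex mat \<Rightarrow> complex mat \<Rightarrow> ereal" where
  "sand_div s \<rho> \<sigma> =
    (let a = s / (2 * (1 + s));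
         S = mat_fun (\<lambda>x. x powr (- a)) \<sigma>;
         Q = Re (mtrace (mat_fun (\<lambda>x. x powr (1 + s)) (S * \<rho> * S)))
     in if (0 < s \<and> \<not> supp_le \<rho> \<sigma>) \<or> Q = 0 then \<infinity> else ereal ((1 / s) * log 2 Q))"

section \<open>Distributions on F_p^2 (represented as functions on {0..<p}^2)\<close>

definition prob_dist :: "nat \<Rightarrow> (nat \<Rightarrow> nat \<Rightarrow> real) \<Rightarrow> bool" where
  "prob_dist p Q \<longleftrightarrow> (\<forall>x<p. \<forall>z<p. 0 \<le> Q x z) \<and> (\<Sum>x<p. \<Sum>z<p. Q x z) = 1"

definition shannon :: "nat \<Rightarrow> (nat \<Rightarrow> nat \<Rightarrow> real) \<Rightarrow> real" where
  "shannon p Q = - (\<Sum>x<p. \<Sum>z<p. Q x z * log 2 (Q x z))"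

definition renyi :: "nat \<Rightarrow> real \<Rightarrow> (nat \<Rightarrow> nat \<Rightarrow> real) \<Rightarrow> real" where
  "renyi p \<alpha> Q = - (1 / (\<alpha> - 1)) * log 2 (\<Sum>x<p. \<Sum>z<p. Q x z powr \<alpha>)"

definition conv :: "nat \<Rightarrow> (nat \<Rightarrow> nat \<Rightarrow> real) \<Rightarrow> (nat \<Rightarrow> nat \<Rightarrow> real) \<Rightarrow> nat \<Rightarrow> nat \<Rightarrow> real" where
  "conv p Pt P x z = (\<Sum>x'<p. \<Sum>z'<p. Pt x' z' * P ((x + p - x') mod p) ((z + p - z') mod p))"

definition omega :: "nat \<Rightarrow> complex" where
  "omega p = cis (2 * pi / real p)"

definition Xop :: "nat \<Rightarrow> complex mat" where
  "Xop p = mat p p (\<lambda>(i, j). if i = (j + 1) mod p then 1 else 0)"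

definition Zop :: "nat \<Rightarrow> complex mat" where
  "Zop p = mat p p (\<lambda>(i, j). if i = j then omega p ^ j else 0)"

definition Wop :: "nat \<Rightarrow> nat \<Rightarrow> nat \<Rightarrow> complex mat" where
  "Wop p x z = Xop p ^\<^sub>m x * Zop p ^\<^sub>m z"

definition Phi :: "nat \<Rightarrow> complex mat" where
  "Phi p = mat (p * p) 1 (\<lambda>(i, _). if i div p = i mod p then complex_of_real (1 / sqrt (real p)) else 0)"

text \<open>|Psi>_ABE, with H_E = C^(p^2), basis |x,z> = index x*p+z.\<close>
definition Psi :: "nat \<Rightarrow> (nat \<Rightarrow> nat \<Rightarrow> real) \<Rightarrow> complex mat" where
  "Psi p P = msum (p * p * (p * p)) 1
     (\<lambda>(x, z). complex_of_real (sqrt (P x z)) \<cdot>\<^sub>m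
        kron (kron (Wop p x z) (1\<^sub>m p) * Phi p) (ket (p * p) (x * p + z)))
     ({..<p} \<times> {..<p})"

definition pauli_B :: "nat \<Rightarrow> (nat \<Rightarrow> nat \<Rightarrow> real) \<Rightarrow> complex mat \<Rightarrow> complex mat" where
  "pauli_B p Q \<rho> = msum (p * p * (p * p)) (p * p * (p * p))
     (\<lambda>(x, z). complex_of_real (Q x z) \<cdot>\<^sub>m
        (kron (kron (1\<^sub>m p) (Wop p x z)) (1\<^sub>m (p * p)) * \<rho> *
         adj (kron (kron (1\<^sub>m p) (Wop p x z)) (1\<^sub>m (p * p)))))
     ({..<p} \<times> {..<p})"

text \<open>The state omega_ABE of the lemma; Pt' x z = Pt (-x) z.\<close>
definition omega_ABE :: "nat \<Rightarrow> (nat \<Rightarrow> nat \<Rightarrow> real) \<Rightarrow> (nat \<Rightarrow> nat \<Rightarrow> real) \<Rightarrow> complex mat" where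
  "omega_ABE p P Pt = pauli_B p (\<lambda>x z. Pt ((p - x) mod p) z) (Psi p P * adj (Psi p P))"

definition cond_entropy :: "nat \<Rightarrow> nat \<Rightarrow> complex mat \<Rightarrow> real" where
  "cond_entropy dA dB \<rho> = vN_entropy \<rho> - vN_entropy (ptrace_first dA dB \<rho>)"

definition cond_renyi_down :: "real \<Rightarrow> nat \<Rightarrow> nat \<Rightarrow> complex mat \<Rightarrow> ereal" where
  "cond_renyi_down s dA dB \<rho> = - sand_div s \<rho> (kron (1\<^sub>m dA) (ptrace_first dA dB \<rho>))"

definition cond_renyi_up :: "real \<Rightarrow> nat \<Rightarrow> nat \<Rightarrow> complex mat \<Rightarrow> ereal" where
  "cond_renyi_up s dA dB \<rho> =
     - (INF \<sigma> \<in> {\<sigma>. density_op dB \<sigma>}. sand_div s \<rho> (kron (1\<^sub>m dA) \<sigma>))"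

end

theory Submission
  imports Defs "Jordan_Normal_Form.Char_Poly" "Jordan_Normal_Form.Determinant" "HOL-Number_Theory.Cong"
begin


lemma mult_entry:
  assumes "A \<in> carrier_mat n m" "B \<in> carrier_mat m k" "i < n" "j < k"
  shows "(A * B) $$ (i, j) = (\<Sum>l<m. A $$ (i, l) * B $$ (l, j))"
  using assms by (auto simp: scalar_prod_def atLeast0LessThan intro!: sum.cong)

lemma adj_dims[simp]: "dim_row (adj A) = dim_col A" "dim_col (adj A) = dim_row A"
  by (auto simp: adj_def)

lemma adj_index[simp]: "i < dim_col A \<Longrightarrow> j < dim_row A \<Longrightarrow> adj A $$ (i, j) = cnj (A $$ (j, i))"
  by (auto simp: adj_def)

lemma adj_carrier[simp]: "A \<in> carrier_mat n m \<Longrightarrow> adj A \<in> carrier_mat m n"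
  unfolding carrier_mat_def by simp

lemma adj_adj[simp]: "adj (adj A) = A"
  by (rule eq_matI) (simp_all add: adj_def)

lemma adj_mult:
  assumes "A \<in> carrier_mat n m" "B \<in> carrier_mat m k"
  shows "adj (A * B) = adj B * adj A"
proof (rule eq_matI)
  fix i j assume ij: "i < dim_row (adj B * adj A)" "j < dim_col (adj B * adj A)"
  then have i: "i < k" and j: "j < n" using assms by auto
  have "adj (A * B) $$ (i, j) = cnj ((A * B) $$ (j, i))"
    using assms i j by simp
  also have "\<dots> = cnj (\<Sum>l<m. A $$ (j, l) * B $$ (l, i))"
    by (subst mult_entry[OF assms j i], rule refl)
  also have "\<dots> = (\<Sum>l<m. adj B $$ (i, l) * adj A $$ (l, j))"
    using assms i j by (auto simp: sum_conjugate intro!: sum.cong)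
  also have "\<dots> = (adj B * adj A) $$ (i, j)"
    using assms i j by (subst mult_entry[of _ k m _ n], auto)
  finally show "adj (A * B) $$ (i, j) = (adj B * adj A) $$ (i, j)" .
qed (use assms in auto)

lemma adj_one[simp]: "adj (1\<^sub>m n) = 1\<^sub>m n"
  by (rule eq_matI) (simp_all add: adj_def)

lemma unitary_carrier: "unitary_mat n U \<Longrightarrow> U \<in> carrier_mat n n"
  by (simp add: unitary_mat_def)

lemma unitary_mult:
  assumes "unitary_mat n U" "unitary_mat n V"
  shows "unitary_mat n (U * V)"
proof -
  have U: "U \<in> carrier_mat n n" and V: "V \<in> carrier_mat n n"
    using assms by (auto simp: unitary_mat_def)
  have aU: "adj U \<in> carrier_mat n n" and aV: "adj V \<in> carrier_mat n n" using U V by auto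
  have 1: "U * adj U = 1\<^sub>m n" "adj U * U = 1\<^sub>m n" "V * adj V = 1\<^sub>m n" "adj V * V = 1\<^sub>m n"
    using assms by (auto simp: unitary_mat_def)
  have "U * V * adj (U * V) = U * V * (adj V * adj U)" by (simp add: adj_mult[OF U V])
  also have "\<dots> = U * (V * (adj V * adj U))" by (rule assoc_mult_mat[OF U V mult_carrier_mat[OF aV aU]])
  also have "V * (adj V * adj U) = (V * adj V) * adj U" by (rule assoc_mult_mat[OF V aV aU, symmetric])
  also have "\<dots> = adj U" using 1(3) left_mult_one_mat[OF aU] by simp
  finally have a: "U * V * adj (U * V) = 1\<^sub>m n" using 1 by simp
  have "adj (U * V) * (U * V) = adj V * adj U * (U * V)" by (simp add: adj_mult[OF U V])
  also have "\<dots> = adj V * (adj U * (U * V))" by (rule assoc_mult_mat[OF aV aU mult_carrier_mat[OF U V]])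
  also have "adj U * (U * V) = (adj U * U) * V" by (rule assoc_mult_mat[OF aU U V, symmetric])
  also have "\<dots> = V" using 1(2) left_mult_one_mat[OF V] by simp
  finally have b: "adj (U * V) * (U * V) = 1\<^sub>m n" using 1 by simp
  show ?thesis using a b U V by (auto simp: unitary_mat_def)
qed


lemma delta_sum_l: "i < (n::nat) \<Longrightarrow> (\<Sum>k<n. (if i = k then 1 else 0) * f k) = (f i :: 'a :: comm_semiring_1)"
  by (induct n) auto

lemma delta_sum_r: "j < (n::nat) \<Longrightarrow> (\<Sum>k<n. f k * (if k = j then 1 else 0)) = (f j :: 'a :: comm_semiring_1)"
  by (induct n) auto

lemma delta_sum_l': "i < (n::nat) \<Longrightarrow> (\<Sum>k<n. (if k = i then 1 else 0) * f k) = (f i :: 'a :: comm_semiring_1)"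
  by (induct n) auto

lemma delta_sum_r': "j < (n::nat) \<Longrightarrow> (\<Sum>k<n. f k * (if j = k then 1 else 0)) = (f j :: 'a :: comm_semiring_1)"
  by (induct n) auto

lemma entry_mult_adj:
  assumes "X \<in> carrier_mat n m" "Y \<in> carrier_mat k m" "i < n" "j < k"
  shows "(X * adj Y) $$ (i, j) = (\<Sum>l<m. X $$ (i, l) * cnj (Y $$ (j, l)))"
proof -
  have "(X * adj Y) $$ (i, j) = (\<Sum>l<m. X $$ (i, l) * adj Y $$ (l, j))"
    using assms by (intro mult_entry[of X n m "adj Y" k]) auto
  also have "\<dots> = (\<Sum>l<m. X $$ (i, l) * cnj (Y $$ (j, l)))"
    using assms by (intro sum.cong) auto
  finally show ?thesis .
qed

lemma entry_adj_mult:
  assumes "X \<in> carrier_mat m n" "Y \<in> carrier_mat m k" "i < n" "j < k"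
  shows "(adj X * Y) $$ (i, j) = (\<Sum>l<m. cnj (X $$ (l, i)) * Y $$ (l, j))"
proof -
  have "(adj X * Y) $$ (i, j) = (\<Sum>l<m. adj X $$ (i, l) * Y $$ (l, j))"
    using assms by (intro mult_entry[of "adj X" n m Y k]) auto
  also have "\<dots> = (\<Sum>l<m. cnj (X $$ (l, i)) * Y $$ (l, j))"
    using assms by (intro sum.cong) auto
  finally show ?thesis .
qed

lemma rdiag_carrier[simp]: "rdiag n l \<in> carrier_mat n n"
  by (simp add: rdiag_def)

lemma rdiag_dims[simp]: "dim_row (rdiag n l) = n" "dim_col (rdiag n l) = n"
  by (simp_all add: rdiag_def)

lemma rdiag_index: "i < n \<Longrightarrow> j < n \<Longrightarrow> rdiag n l $$ (i, j) = (if i = j then complex_of_real (l i) else 0)"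
  by (simp add: rdiag_def)

lemma sum_rdiag: "q < m \<Longrightarrow> (\<Sum>r<m. f r * rdiag m l $$ (r, q)) = f q * complex_of_real (l q)"
proof -
  assume q: "q < m"
  have "(\<Sum>r<m. f r * rdiag m l $$ (r, q)) = (\<Sum>r<m. (f r * complex_of_real (l q)) * (if r = q then 1 else 0))"
    using q by (intro sum.cong) (auto simp: rdiag_index)
  also have "\<dots> = f q * complex_of_real (l q)" using q by (rule delta_sum_r)
  finally show ?thesis .
qed

lemma udu_entry:
  assumes X: "X \<in> carrier_mat n m" and Y: "Y \<in> carrier_mat k m" and ij: "i < n" "j < k"
  shows "(X * rdiag m l * adj Y) $$ (i, j) = (\<Sum>q<m. X $$ (i, q) * complex_of_real (l q) * cnj (Y $$ (j, q)))"
proof -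
  have XD: "X * rdiag m l \<in> carrier_mat n m" using X by simp
  have "(X * rdiag m l * adj Y) $$ (i, j) = (\<Sum>q<m. (X * rdiag m l) $$ (i, q) * cnj (Y $$ (j, q)))"
    by (rule entry_mult_adj[OF XD Y ij])
  also have "\<dots> = (\<Sum>q<m. X $$ (i, q) * complex_of_real (l q) * cnj (Y $$ (j, q)))"
  proof (rule sum.cong[OF refl])
    fix q assume q: "q \<in> {..<m}"
    have "(X * rdiag m l) $$ (i, q) = (\<Sum>r<m. X $$ (i, r) * rdiag m l $$ (r, q))"
      using X ij q by (intro mult_entry) auto
    also have "\<dots> = X $$ (i, q) * complex_of_real (l q)" using q by (intro sum_rdiag) auto
    finally show "(X * rdiag m l) $$ (i, q) * cnj (Y $$ (j, q)) = X $$ (i, q) * complex_of_real (l q) * cnj (Y $$ (j, q))"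
      by simp
  qed
  finally show ?thesis .
qed

lemma unitary_fun:
  fixes h :: "nat \<Rightarrow> nat \<Rightarrow> complex"
  assumes c: "cnj c * c = 1"
    and herm: "\<And>i j. i < n \<Longrightarrow> j < n \<Longrightarrow> cnj (h j i) = h i j"
    and sq: "\<And>i j. i < n \<Longrightarrow> j < n \<Longrightarrow> (\<Sum>k<n. h i k * h k j) = (if i = j then 1 else 0)"
  shows "unitary_mat n (mat n n (\<lambda>(i, j). c * h i j))"
proof -
  let ?U = "mat n n (\<lambda>(i, j). c * h i j)"
  have U: "?U \<in> carrier_mat n n" by simp
  have 1: "?U * adj ?U = 1\<^sub>m n"
  proof (rule eq_matI)
    fix i j assume "i < dim_row (1\<^sub>m n)" "j < dim_col (1\<^sub>m n)"
    then have ij: "i < n" "j < n" by auto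
    have "(?U * adj ?U) $$ (i, j) = (\<Sum>k<n. (c * h i k) * cnj (c * h j k))"
      using ij by (subst entry_mult_adj[OF U U ij]) simp
    also have "\<dots> = (\<Sum>k<n. (cnj c * c) * (h i k * h k j))"
      using ij herm by (intro sum.cong) (auto simp: algebra_simps)
    also have "\<dots> = (if i = j then 1 else 0)" using sq[OF ij] c by (simp add: sum_distrib_left[symmetric])
    finally show "(?U * adj ?U) $$ (i, j) = 1\<^sub>m n $$ (i, j)" using ij by simp
  qed auto
  have 2: "adj ?U * ?U = 1\<^sub>m n"
  proof (rule eq_matI)
    fix i j assume "i < dim_row (1\<^sub>m n)" "j < dim_col (1\<^sub>m n)"
    then have ij: "i < n" "j < n" by auto
    have "(adj ?U * ?U) $$ (i, j) = (\<Sum>k<n. cnj (c * h k i) * (c * h k j))"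
      using ij by (subst entry_adj_mult[OF U U ij]) simp
    also have "\<dots> = (\<Sum>k<n. (cnj c * c) * (h i k * h k j))"
      using ij herm by (intro sum.cong) (auto simp: algebra_simps)
    also have "\<dots> = (if i = j then 1 else 0)" using sq[OF ij] c by (simp add: sum_distrib_left[symmetric])
    finally show "(adj ?U * ?U) $$ (i, j) = 1\<^sub>m n $$ (i, j)" using ij by simp
  qed auto
  show ?thesis using 1 2 U by (simp add: unitary_mat_def)
qed



lemma cnj_mult_self: "cnj z * z = complex_of_real ((cmod z)^2)"
  using complex_norm_square[of z] by (simp add: mult.commute)

lemma aux_div: "x \<noteq> 0 \<Longrightarrow> 2 / (2 * x) * x = (1::complex)"
  by (simp add: field_simps)

lemma unit_completion:
  fixes v :: "nat \<Rightarrow> complex"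
  assumes n: "0 < n" and nv: "(\<Sum>i<n. cnj (v i) * v i) = 1"
  shows "\<exists>U. unitary_mat n U \<and> (\<forall>i<n. U $$ (i, 0) = v i)"
proof -
  define r where "r = cmod (v 0)"
  define c where "c = (if v 0 = 0 then 1 else v 0 / complex_of_real r)"
  have r0: "r \<ge> 0" by (simp add: r_def)
  have vv: "cnj (v 0) * v 0 = complex_of_real (r^2)" by (simp add: r_def cnj_mult_self)
  have cc: "cnj c * c = 1"
  proof (cases "v 0 = 0")
    case False
    then have "r \<noteq> 0" by (simp add: r_def)
    then show ?thesis using False vv by (simp add: c_def field_simps power2_eq_square)
  qed (simp add: c_def)
  have cv: "cnj c * v 0 = complex_of_real r"
  proof (cases "v 0 = 0")
    case False
    then have "r \<noteq> 0" by (simp add: r_def)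
    then show ?thesis using False vv by (simp add: c_def field_simps power2_eq_square)
  qed (simp add: c_def r_def)
  have cv2: "c * cnj (v 0) = complex_of_real r"
  proof -
    have "cnj (cnj c * v 0) = cnj (complex_of_real r)" using cv by simp
    then show ?thesis by (simp add: mult.commute)
  qed
  define w where "w i = v i + (if i = 0 then c else 0)" for i
  define N where "N = (\<Sum>i<n. cnj (w i) * w i)"
  obtain m where m: "n = Suc m" using n by (cases n) auto
  have S1: "N = cnj (w 0) * w 0 + (\<Sum>i<m. cnj (v (Suc i)) * v (Suc i))"
    unfolding N_def m sum.lessThan_Suc_shift by (simp add: w_def)
  have S2: "1 = cnj (v 0) * v 0 + (\<Sum>i<m. cnj (v (Suc i)) * v (Suc i))"
    using nv unfolding m sum.lessThan_Suc_shift by simp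
  have w0: "cnj (w 0) * w 0 = cnj (v 0) * v 0 + cnj (v 0) * c + cnj c * v 0 + cnj c * c"
    by (simp add: w_def algebra_simps)
  have N: "N = complex_of_real (2 + 2 * r)"
    using S1 S2 w0 cv cv2 cc by (simp add: algebra_simps)
  have Nnz: "N \<noteq> 0" using N r0
    by (metis add_nonneg_nonneg of_real_eq_0_iff zero_le_mult_iff zero_less_numeral zero_le_numeral add_pos_nonneg less_irrefl)
  have cN: "cnj N = N" using N by simp
  define a where "a = 2 / N"
  have ca: "cnj a = a" using cN by (simp add: a_def)
  have aN: "a * a * N = 2 * a" using Nnz by (simp add: a_def field_simps)
  define h where "h i j = (if i = j then 1 else 0) - a * w i * cnj (w j)" for i j
  have herm: "cnj (h j i) = h i j" if "i < n" "j < n" for i j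
    using ca by (auto simp: h_def)
  have sq: "(\<Sum>k<n. h i k * h k j) = (if i = j then 1 else 0)" if ij: "i < n" "j < n" for i j
  proof -
    have "(\<Sum>k<n. h i k * h k j) =
        (\<Sum>k<n. (if i = k then 1 else 0) * (if k = j then 1 else 0))
      - (\<Sum>k<n. (if i = k then 1 else 0) * (a * w k * cnj (w j)))
      - (\<Sum>k<n. (a * w i * cnj (w k)) * (if k = j then 1 else 0))
      + (\<Sum>k<n. (a * w i * cnj (w k)) * (a * w k * cnj (w j)))"
      by (simp add: h_def sum_subtractf sum.distrib algebra_simps)
    also have "(\<Sum>k<n. (if i = k then 1 else 0) * (if k = j then 1 else 0)) = (if i = j then 1 else (0::complex))"
      using ij by (subst delta_sum_l) auto
    also have "(\<Sum>k<n. (if i = k then 1 else 0) * (a * w k * cnj (w j))) = a * w i * cnj (w j)"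
      using ij by (subst delta_sum_l) auto
    also have "(\<Sum>k<n. (a * w i * cnj (w k)) * (if k = j then 1 else 0)) = a * w i * cnj (w j)"
      using ij by (subst delta_sum_r) auto
    also have "(\<Sum>k<n. (a * w i * cnj (w k)) * (a * w k * cnj (w j))) = (a * a * N) * w i * cnj (w j)"
      by (simp add: N_def sum_distrib_left sum_distrib_right algebra_simps)
    also have "(a * a * N) * w i * cnj (w j) = 2 * a * w i * cnj (w j)" using aN by simp
    finally show ?thesis by simp
  qed
  have U: "unitary_mat n (mat n n (\<lambda>(i, j). (- c) * h i j))"
    by (rule unitary_fun) (use cc herm sq in auto)
  have col: "mat n n (\<lambda>(i, j). (- c) * h i j) $$ (i, 0) = v i" if i: "i < n" for i
  proof -
    have w0': "c * cnj (w 0) = complex_of_real (r + 1)"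
      using cv2 cc by (simp add: w_def algebra_simps mult.commute)
    have "(- c) * h i 0 = - c * (if i = 0 then 1 else 0) + a * (c * cnj (w 0)) * w i"
      by (simp add: h_def algebra_simps)
    have r1: "complex_of_real (r + 1) \<noteq> 0" using r0 by (simp only: of_real_eq_0_iff)
    have N2: "N = 2 * complex_of_real (r + 1)" using N by (simp add: algebra_simps)
    have "a * (c * cnj (w 0)) = 1"
      unfolding a_def w0' N2 using r1 aux_div by blast
    note \<open>- c * h i 0 = _\<close>
    also note \<open>a * (c * cnj (w 0)) = 1\<close>
    finally show ?thesis using i n by (simp add: w_def)
  qed
  show ?thesis using U col by blast
qed




lemma eigen_exists:
  fixes A :: "complex mat"
  assumes A: "A \<in> carrier_mat n n" and n: "0 < n"
  shows "\<exists>e v. v \<in> carrier_vec n \<and> v \<noteq> 0\<^sub>v n \<and> A *\<^sub>v v = e \<cdot>\<^sub>v v"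
proof -
  obtain as where cp: "char_poly A = (\<Prod>a\<leftarrow>as. [:- a, 1:])" and len: "length as = n"
    using char_poly_factorized[OF A] by blast
  then obtain e rest where as: "as = e # rest" using n by (cases as) auto
  have "poly (char_poly A) e = 0" unfolding cp as by simp
  then have "eigenvalue A e" using eigenvalue_root_char_poly[OF A] by simp
  then obtain v where "eigenvector A v e" unfolding eigenvalue_def by blast
  then show ?thesis using A unfolding eigenvector_def by auto
qed

lemma assoc_n: "X \<in> carrier_mat n n \<Longrightarrow> Y \<in> carrier_mat n n \<Longrightarrow> Z \<in> carrier_mat n n \<Longrightarrow> X * Y * Z = X * (Y * Z)"
  by (rule assoc_mult_mat)

lemma mult_n: "X \<in> carrier_mat n n \<Longrightarrow> Y \<in> carrier_mat n n \<Longrightarrow> X * Y \<in> carrier_mat n n"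
  by (rule mult_carrier_mat)

lemma conj_conj:
  assumes H: "H \<in> carrier_mat n n" and F: "F \<in> carrier_mat n n" and D: "D \<in> carrier_mat n n"
  shows "H * (F * D * adj F) * adj H = (H * F) * D * adj (H * F)"
proof -
  have aF: "adj F \<in> carrier_mat n n" and aH: "adj H \<in> carrier_mat n n" using H F by auto
  have "(H * F) * D * adj (H * F) = (H * F) * D * (adj F * adj H)" by (simp add: adj_mult[OF H F])
  also have "\<dots> = H * (F * D) * (adj F * adj H)" by (simp add: assoc_n[OF H F D])
  also have "\<dots> = H * ((F * D) * (adj F * adj H))" by (rule assoc_n[OF H mult_n[OF F D] mult_n[OF aF aH]])
  also have "(F * D) * (adj F * adj H) = ((F * D) * adj F) * adj H" by (rule assoc_n[OF mult_n[OF F D] aF aH, symmetric])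
  also have "H * (((F * D) * adj F) * adj H) = H * ((F * D) * adj F) * adj H"
    by (rule assoc_n[OF H mult_n[OF mult_n[OF F D] aF] aH, symmetric])
  finally show ?thesis ..
qed

lemma unconj:
  assumes H: "unitary_mat n H" and A: "A \<in> carrier_mat n n"
  shows "H * (adj H * A * H) * adj H = A"
proof -
  have Hc: "H \<in> carrier_mat n n" using H by (simp add: unitary_mat_def)
  have aH: "adj H \<in> carrier_mat n n" using Hc by auto
  have 1: "H * adj H = 1\<^sub>m n" "adj H * H = 1\<^sub>m n" using H by (auto simp: unitary_mat_def)
  have "H * (adj H * A * H) * adj H = H * (adj H * (A * H)) * adj H" by (simp add: assoc_n[OF aH A Hc])
  also have "H * (adj H * (A * H)) = (H * adj H) * (A * H)" by (rule assoc_n[OF Hc aH mult_n[OF A Hc], symmetric])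
  also have "\<dots> = A * H" using 1 left_mult_one_mat[OF mult_n[OF A Hc]] by simp
  also have "A * H * adj H = A * (H * adj H)" by (rule assoc_n[OF A Hc aH])
  also have "\<dots> = A" using 1 right_mult_one_mat[OF A] by simp
  finally show ?thesis .
qed

lemma adj_conj:
  assumes H: "H \<in> carrier_mat n n" and A: "A \<in> carrier_mat n n" and hA: "adj A = A"
  shows "adj (adj H * A * H) = adj H * A * H"
proof -
  have aH: "adj H \<in> carrier_mat n n" using H by auto
  have "adj (adj H * A * H) = adj H * adj (adj H * A)" by (rule adj_mult[OF mult_n[OF aH A] H])
  also have "adj (adj H * A) = adj A * adj (adj H)" by (rule adj_mult[OF aH A])
  also have "adj H * (adj A * adj (adj H)) = adj H * A * H" using hA by (simp add: assoc_n[OF aH A H])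
  finally show ?thesis .
qed


lemma block_unitary:
  assumes U: "unitary_mat m U"
  defines "F \<equiv> mat (Suc m) (Suc m) (\<lambda>(i, j). if i = 0 then (if j = 0 then 1 else 0)
                   else if j = 0 then 0 else U $$ (i - 1, j - 1))"
  shows "unitary_mat (Suc m) F"
proof -
  have Uc: "U \<in> carrier_mat m m" using U by (simp add: unitary_mat_def)
  have 1: "U * adj U = 1\<^sub>m m" "adj U * U = 1\<^sub>m m" using U by (auto simp: unitary_mat_def)
  have Fc: "F \<in> carrier_mat (Suc m) (Suc m)" by (simp add: F_def)
  have a: "F * adj F = 1\<^sub>m (Suc m)"
  proof (rule eq_matI)
    fix i j assume "i < dim_row (1\<^sub>m (Suc m))" "j < dim_col (1\<^sub>m (Suc m))"
    then have ij: "i < Suc m" "j < Suc m" by auto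
    have e: "(F * adj F) $$ (i, j) = F $$ (i, 0) * cnj (F $$ (j, 0)) + (\<Sum>k<m. F $$ (i, Suc k) * cnj (F $$ (j, Suc k)))"
      by (subst entry_mult_adj[OF Fc Fc ij], subst sum.lessThan_Suc_shift, rule refl)
    show "(F * adj F) $$ (i, j) = 1\<^sub>m (Suc m) $$ (i, j)"
    proof (cases "i = 0 \<or> j = 0")
      case True then show ?thesis using ij unfolding e by (auto simp: F_def)
    next
      case False
      then obtain i' j' where ii: "i = Suc i'" "j = Suc j'" by (cases i; cases j) auto
      have "(\<Sum>k<m. F $$ (i, Suc k) * cnj (F $$ (j, Suc k))) = (U * adj U) $$ (i', j')"
        using ij ii by (subst entry_mult_adj[OF Uc Uc]) (auto simp: F_def)
      then show ?thesis using ij ii 1 unfolding e by (auto simp: F_def)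
    qed
  qed (auto simp: F_def)
  have b: "adj F * F = 1\<^sub>m (Suc m)"
  proof (rule eq_matI)
    fix i j assume "i < dim_row (1\<^sub>m (Suc m))" "j < dim_col (1\<^sub>m (Suc m))"
    then have ij: "i < Suc m" "j < Suc m" by auto
    have e: "(adj F * F) $$ (i, j) = cnj (F $$ (0, i)) * F $$ (0, j) + (\<Sum>k<m. cnj (F $$ (Suc k, i)) * F $$ (Suc k, j))"
      by (subst entry_adj_mult[OF Fc Fc ij], subst sum.lessThan_Suc_shift, rule refl)
    show "(adj F * F) $$ (i, j) = 1\<^sub>m (Suc m) $$ (i, j)"
    proof (cases "i = 0 \<or> j = 0")
      case True then show ?thesis using ij unfolding e by (auto simp: F_def)
    next
      case False
      then obtain i' j' where ii: "i = Suc i'" "j = Suc j'" by (cases i; cases j) auto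
      have "(\<Sum>k<m. cnj (F $$ (Suc k, i)) * F $$ (Suc k, j)) = (adj U * U) $$ (i', j')"
        using ij ii by (subst entry_adj_mult[OF Uc Uc]) (auto simp: F_def)
      then show ?thesis using ij ii 1 unfolding e by (auto simp: F_def)
    qed
  qed (auto simp: F_def)
  show ?thesis using a b Fc by (simp add: unitary_mat_def)
qed

lemma spectral_hermitian:
  fixes A :: "complex mat"
  assumes "A \<in> carrier_mat n n" "adj A = A"
  shows "\<exists>U l. unitary_mat n U \<and> A = U * rdiag n l * adj U"
  using assms
proof (induct n arbitrary: A)
  case 0
  have "A = 1\<^sub>m 0 * rdiag 0 (\<lambda>_. 0) * adj (1\<^sub>m 0)"
    using 0 by (intro eq_matI) auto
  moreover have "unitary_mat 0 (1\<^sub>m 0)" by (auto simp: unitary_mat_def)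
  ultimately show ?case by blast
next
  case (Suc m A)
  let ?n = "Suc m"
  have A: "A \<in> carrier_mat ?n ?n" and hA: "adj A = A" using Suc by auto
  obtain e v where v: "v \<in> carrier_vec ?n" "v \<noteq> 0\<^sub>v ?n" and Av: "A *\<^sub>v v = e \<cdot>\<^sub>v v"
    using eigen_exists[OF A] by auto
  obtain i0 where i0: "i0 < ?n" "v $ i0 \<noteq> 0"
  proof -
    have "\<exists>i<?n. v $ i \<noteq> 0"
    proof (rule ccontr)
      assume "\<not> ?thesis"
      then have "v = 0\<^sub>v ?n" using v by (intro eq_vecI) auto
      then show False using v by simp
    qed
    then show ?thesis using that by blast
  qed
  define ss where "ss = (\<Sum>i<?n. (cmod (v $ i))^2)"
  have ss: "ss > 0" unfolding ss_def
    by (rule sum_pos2[of _ i0]) (use i0 in auto)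
  define nv where "nv = sqrt ss"
  have nv: "nv > 0" using ss by (simp add: nv_def)
  define u where "u i = v $ i / complex_of_real nv" for i
  have un: "(\<Sum>i<?n. cnj (u i) * u i) = 1"
  proof -
    have "(\<Sum>i<?n. cnj (u i) * u i) = (\<Sum>i<?n. complex_of_real ((cmod (v $ i))^2) / complex_of_real (nv^2))"
      by (intro sum.cong) (auto simp: u_def cnj_mult_self power2_eq_square)
    also have "\<dots> = complex_of_real ss / complex_of_real (nv^2)"
      unfolding ss_def by (simp only: of_real_sum sum_divide_distrib)
    also have "\<dots> = 1" using ss by (simp add: nv_def)
    finally show ?thesis .
  qed
  obtain H where H: "unitary_mat ?n H" and Hu: "\<forall>i<?n. H $$ (i, 0) = u i"
    using unit_completion[OF _ un] by auto
  have Hc: "H \<in> carrier_mat ?n ?n" using H by (simp add: unitary_mat_def)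
  have aH: "adj H \<in> carrier_mat ?n ?n" using Hc by auto
  have HH: "adj H * H = 1\<^sub>m ?n" using H by (simp add: unitary_mat_def)
  have Au: "(\<Sum>l<?n. A $$ (k, l) * u l) = e * u k" if k: "k < ?n" for k
  proof -
    have "(A *\<^sub>v v) $ k = (\<Sum>l<?n. A $$ (k, l) * v $ l)"
      using A v k by (auto simp: scalar_prod_def atLeast0LessThan intro!: sum.cong)
    then have "(\<Sum>l<?n. A $$ (k, l) * v $ l) = e * v $ k" using Av v k by simp
    moreover have "(\<Sum>l<?n. A $$ (k, l) * u l) = (\<Sum>l<?n. A $$ (k, l) * v $ l) / complex_of_real nv"
      by (simp only: u_def sum_divide_distrib times_divide_eq_right)
    ultimately show ?thesis by (simp add: u_def)
  qed
  define B where "B = adj H * A * H"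
  have Bc: "B \<in> carrier_mat ?n ?n" unfolding B_def by (rule mult_n[OF mult_n[OF aH A] Hc])
  have hB: "adj B = B" unfolding B_def by (rule adj_conj[OF Hc A hA])
  have B0: "B $$ (i, 0) = (if i = 0 then e else 0)" if i: "i < ?n" for i
  proof -
    have "B $$ (i, 0) = (\<Sum>l<?n. (adj H * A) $$ (i, l) * H $$ (l, 0))"
      unfolding B_def by (rule mult_entry[of _ ?n ?n _ ?n]) (use i Hc A in auto)
    also have "\<dots> = (\<Sum>l<?n. (\<Sum>k<?n. cnj (H $$ (k, i)) * A $$ (k, l)) * u l)"
      by (intro sum.cong refl, subst entry_adj_mult[OF Hc A]) (use i Hu in auto)
    also have "\<dots> = (\<Sum>k<?n. cnj (H $$ (k, i)) * (\<Sum>l<?n. A $$ (k, l) * u l))"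
      unfolding sum_distrib_left sum_distrib_right mult.assoc by (rule sum.swap)
    also have "\<dots> = (\<Sum>k<?n. cnj (H $$ (k, i)) * (e * H $$ (k, 0)))"
      by (intro sum.cong refl) (metis Au Hu lessThan_iff)
    also have "\<dots> = e * (\<Sum>k<?n. cnj (H $$ (k, i)) * H $$ (k, 0))"
      unfolding sum_distrib_left by (intro sum.cong refl) (simp only: mult.left_commute)
    also have "(\<Sum>k<?n. cnj (H $$ (k, i)) * H $$ (k, 0)) = (adj H * H) $$ (i, 0)"
      by (rule entry_adj_mult[OF Hc Hc, symmetric]) (use i in auto)
    finally show ?thesis using HH i by simp
  qed
  have ereal: "cnj e = e"
  proof -
    have "adj B $$ (0, 0) = cnj (B $$ (0, 0))" using Bc by simp
    then show ?thesis using hB B0[of 0] by simp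
  qed
  then have eRe: "e = complex_of_real (Re e)" by (metis Reals_cnj_iff complex_is_Real_iff of_real_Re)
  have B0': "B $$ (0, j) = (if j = 0 then e else 0)" if j: "j < ?n" for j
  proof -
    have "B $$ (0, j) = adj B $$ (0, j)" using hB by simp
    also have "\<dots> = cnj (B $$ (j, 0))" using Bc j by simp
    finally show ?thesis using B0[OF j] ereal by auto
  qed
  define B' where "B' = mat m m (\<lambda>(i, j). B $$ (Suc i, Suc j))"
  have B'c: "B' \<in> carrier_mat m m" by (simp add: B'_def)
  have hB': "adj B' = B'"
  proof (rule eq_matI)
    fix i j assume "i < dim_row B'" "j < dim_col B'"
    then have ij: "i < m" "j < m" by (auto simp: B'_def)
    have "adj B' $$ (i, j) = cnj (B $$ (Suc j, Suc i))" using ij by (simp add: B'_def)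
    also have "\<dots> = adj B $$ (Suc i, Suc j)" using ij Bc by simp
    finally show "adj B' $$ (i, j) = B' $$ (i, j)" using hB ij by (simp add: B'_def)
  qed (auto simp: B'_def)
  obtain U' l' where U': "unitary_mat m U'" and B'd: "B' = U' * rdiag m l' * adj U'"
    using Suc(1)[OF B'c hB'] by blast
  have U'c: "U' \<in> carrier_mat m m" using U' by (simp add: unitary_mat_def)
  define F where "F = mat ?n ?n (\<lambda>(i, j). if i = 0 then (if j = 0 then 1 else 0)
                   else if j = 0 then 0 else U' $$ (i - 1, j - 1))"
  have F: "unitary_mat ?n F" unfolding F_def by (rule block_unitary[OF U'])
  have Fc: "F \<in> carrier_mat ?n ?n" by (simp add: F_def)
  define l where "l i = (if i = 0 then Re e else l' (i - 1))" for i
  have BF: "B = F * rdiag ?n l * adj F"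
  proof (rule eq_matI)
    fix i j assume "i < dim_row (F * rdiag ?n l * adj F)" "j < dim_col (F * rdiag ?n l * adj F)"
    then have ij: "i < ?n" "j < ?n" using Fc by auto
    have e: "(F * rdiag ?n l * adj F) $$ (i, j) = F $$ (i, 0) * complex_of_real (l 0) * cnj (F $$ (j, 0))
        + (\<Sum>k<m. F $$ (i, Suc k) * complex_of_real (l (Suc k)) * cnj (F $$ (j, Suc k)))"
      by (subst udu_entry[OF Fc Fc ij], subst sum.lessThan_Suc_shift, rule refl)
    show "B $$ (i, j) = (F * rdiag ?n l * adj F) $$ (i, j)"
    proof (cases "i = 0 \<or> j = 0")
      case True then show ?thesis using ij B0 B0' eRe unfolding e by (auto simp: F_def l_def)
    next
      case False
      then obtain i' j' where ii: "i = Suc i'" "j = Suc j'" by (cases i; cases j) auto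
      have "(\<Sum>k<m. F $$ (i, Suc k) * complex_of_real (l (Suc k)) * cnj (F $$ (j, Suc k)))
           = (U' * rdiag m l' * adj U') $$ (i', j')"
        using ij ii by (subst udu_entry[OF U'c U'c]) (auto simp: F_def l_def)
      also have "\<dots> = B $$ (i, j)" using ij ii unfolding B'd[symmetric] by (simp add: B'_def)
      finally show ?thesis using ij ii unfolding e by (auto simp: F_def)
    qed
  qed (use Fc Bc in auto)
  have "A = H * B * adj H" unfolding B_def using unconj[OF H A] by simp
  also have "\<dots> = (H * F) * rdiag ?n l * adj (H * F)"
    unfolding BF by (rule conj_conj[OF Hc Fc rdiag_carrier])
  finally show ?case using unitary_mult[OF H F] by blast
qed




definition orthmat :: "nat \<Rightarrow> 'k set \<Rightarrow> ('k \<Rightarrow> complex) \<Rightarrow> ('k \<Rightarrow> nat \<Rightarrow> complex) \<Rightarrow> complex mat" where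
  "orthmat n K a v = mat n n (\<lambda>(i, j). \<Sum>k\<in>K. a k * v k i * cnj (v k j))"

definition orthonormal :: "nat \<Rightarrow> 'k set \<Rightarrow> ('k \<Rightarrow> nat \<Rightarrow> complex) \<Rightarrow> bool" where
  "orthonormal n K v \<longleftrightarrow> (\<forall>k\<in>K. \<forall>k'\<in>K. (\<Sum>i<n. cnj (v k i) * v k' i) = (if k = k' then 1 else 0))"

lemma orthmat_carrier[simp]: "orthmat n K a v \<in> carrier_mat n n"
  by (simp add: orthmat_def)

lemma orthmat_dims[simp]: "dim_row (orthmat n K a v) = n" "dim_col (orthmat n K a v) = n"
  by (simp_all add: orthmat_def)

lemma orthmat_index: "i < n \<Longrightarrow> j < n \<Longrightarrow> orthmat n K a v $$ (i, j) = (\<Sum>k\<in>K. a k * v k i * cnj (v k j))"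
  by (simp add: orthmat_def)

lemma orthmat_mult:
  assumes fin: "finite K" and on: "orthonormal n K v"
  shows "orthmat n K a v * orthmat n K b v = orthmat n K (\<lambda>k. a k * b k) v"
proof (rule eq_matI)
  fix i j assume "i < dim_row (orthmat n K (\<lambda>k. a k * b k) v)" "j < dim_col (orthmat n K (\<lambda>k. a k * b k) v)"
  then have ij: "i < n" "j < n" by (auto simp: orthmat_def)
  have "(orthmat n K a v * orthmat n K b v) $$ (i, j)
      = (\<Sum>r<n. (\<Sum>k\<in>K. a k * v k i * cnj (v k r)) * (\<Sum>k'\<in>K. b k' * v k' r * cnj (v k' j)))"
    by (subst mult_entry[of _ n n _ n]) (use ij in \<open>auto simp: orthmat_index intro!: sum.cong\<close>)
  also have "\<dots> = (\<Sum>r<n. \<Sum>k\<in>K. \<Sum>k'\<in>K. (a k * v k i * cnj (v k r)) * (b k' * v k' r * cnj (v k' j)))"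
    by (simp only: sum_product)
  also have "\<dots> = (\<Sum>k\<in>K. \<Sum>r<n. \<Sum>k'\<in>K. (a k * v k i * cnj (v k r)) * (b k' * v k' r * cnj (v k' j)))"
    by (rule sum.swap)
  also have "\<dots> = (\<Sum>k\<in>K. \<Sum>k'\<in>K. \<Sum>r<n. (a k * v k i * cnj (v k r)) * (b k' * v k' r * cnj (v k' j)))"
    by (intro sum.cong refl) (rule sum.swap)
  also have "\<dots> = (\<Sum>k\<in>K. \<Sum>k'\<in>K. (a k * v k i * b k' * cnj (v k' j)) * (\<Sum>r<n. cnj (v k r) * v k' r))"
    by (intro sum.cong refl) (simp add: sum_distrib_left algebra_simps)
  also have "\<dots> = (\<Sum>k\<in>K. \<Sum>k'\<in>K. if k' = k then a k * v k i * b k * cnj (v k j) else 0)"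
    using on by (intro sum.cong refl) (auto simp: orthonormal_def)
  also have "\<dots> = (\<Sum>k\<in>K. a k * b k * v k i * cnj (v k j))"
    using fin by (intro sum.cong refl) (simp add: sum.delta mult.commute mult.left_commute)
  also have "\<dots> = orthmat n K (\<lambda>k. a k * b k) v $$ (i, j)"
    using ij by (simp add: orthmat_index)
  finally show "(orthmat n K a v * orthmat n K b v) $$ (i, j) = orthmat n K (\<lambda>k. a k * b k) v $$ (i, j)" .
qed (auto simp: orthmat_def)

lemma orthmat_pow:
  assumes fin: "finite K" and on: "orthonormal n K v" and d: "d \<ge> 1"
  shows "orthmat n K a v ^\<^sub>m d = orthmat n K (\<lambda>k. a k ^ d) v"
  using d
proof (induct d)
  case (Suc d)
  show ?case
  proof (cases "d = 0")
    case True then show ?thesis by simp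
  next
    case False
    then have "orthmat n K a v ^\<^sub>m d = orthmat n K (\<lambda>k. a k ^ d) v" using Suc by simp
    then show ?thesis using orthmat_mult[OF fin on, of "\<lambda>k. a k ^ d" a] by (simp add: mult.commute)
  qed
qed simp

lemma orthmat_trace:
  assumes on: "orthonormal n K v"
  shows "mtrace (orthmat n K a v) = (\<Sum>k\<in>K. a k)"
proof -
  have "mtrace (orthmat n K a v) = (\<Sum>i<n. \<Sum>k\<in>K. a k * v k i * cnj (v k i))"
    by (simp add: mtrace_def orthmat_index)
  also have "\<dots> = (\<Sum>k\<in>K. a k * (\<Sum>i<n. cnj (v k i) * v k i))"
    by (subst sum.swap) (simp add: sum_distrib_left algebra_simps)
  also have "\<dots> = (\<Sum>k\<in>K. a k)" using on by (intro sum.cong refl) (simp add: orthonormal_def)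
  finally show ?thesis .
qed

lemma orthmat_adj:
  assumes "\<And>k. k \<in> K \<Longrightarrow> cnj (a k) = a k"
  shows "adj (orthmat n K a v) = orthmat n K a v"
  by (rule eq_matI) (use assms in \<open>auto simp: orthmat_def adj_def algebra_simps intro!: sum.cong\<close>)

lemma interp_poly:
  fixes f :: "real \<Rightarrow> real"
  assumes "finite S"
  shows "\<exists>q. \<forall>x\<in>S. poly q x = f x"
  using assms
proof (induct S rule: finite_induct)
  case empty then show ?case by auto
next
  case (insert a S)
  then obtain q where q: "\<forall>x\<in>S. poly q x = f x" by blast
  define r where "r = (\<Prod>s\<in>S. [:- s, 1:])"
  have ra: "poly r a \<noteq> 0" using insert(1,2) by (auto simp: r_def poly_prod)
  have rS: "poly r x = 0" if "x \<in> S" for x using insert(1) that by (auto simp: r_def poly_prod)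
  define q' where "q' = q + Polynomial.smult ((f a - poly q a) / poly r a) r"
  have "\<forall>x\<in>insert a S. poly q' x = f x"
    using q rS ra by (auto simp: q'_def)
  then show ?case by blast
qed


lemma rdiag_mult: "rdiag n a * rdiag n b = rdiag n (\<lambda>i. a i * b i)"
proof (rule eq_matI)
  fix i j assume "i < dim_row (rdiag n (\<lambda>i. a i * b i))" "j < dim_col (rdiag n (\<lambda>i. a i * b i))"
  then have ij: "i < n" "j < n" by auto
  have "(rdiag n a * rdiag n b) $$ (i, j) = (\<Sum>r<n. rdiag n a $$ (i, r) * rdiag n b $$ (r, j))"
    using ij by (intro mult_entry) auto
  also have "\<dots> = rdiag n a $$ (i, j) * complex_of_real (b j)" by (rule sum_rdiag[OF ij(2)])
  finally show "(rdiag n a * rdiag n b) $$ (i, j) = rdiag n (\<lambda>i. a i * b i) $$ (i, j)"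
    using ij by (simp add: rdiag_index)
qed auto

lemma rdiag_one: "rdiag n (\<lambda>_. 1) = 1\<^sub>m n"
  by (rule eq_matI) (auto simp: rdiag_index)

lemma udu_mult:
  assumes U: "unitary_mat n U"
  shows "(U * rdiag n a * adj U) * (U * rdiag n b * adj U) = U * rdiag n (\<lambda>i. a i * b i) * adj U"
proof -
  have Uc: "U \<in> carrier_mat n n" using U by (simp add: unitary_mat_def)
  have aU: "adj U \<in> carrier_mat n n" using Uc by auto
  have aUU: "adj U * U = 1\<^sub>m n" using U by (simp add: unitary_mat_def)
  have D1: "rdiag n a \<in> carrier_mat n n" and D2: "rdiag n b \<in> carrier_mat n n" by auto
  have "(U * rdiag n a * adj U) * (U * rdiag n b * adj U) = (U * rdiag n a) * (adj U * (U * rdiag n b * adj U))"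
    by (rule assoc_n[OF mult_n[OF Uc D1] aU mult_n[OF mult_n[OF Uc D2] aU]])
  also have "adj U * (U * rdiag n b * adj U) = adj U * (U * (rdiag n b * adj U))" by (simp add: assoc_n[OF Uc D2 aU])
  also have "\<dots> = (adj U * U) * (rdiag n b * adj U)" by (rule assoc_n[OF aU Uc mult_n[OF D2 aU], symmetric])
  also have "\<dots> = rdiag n b * adj U" using aUU left_mult_one_mat[OF mult_n[OF D2 aU]] by simp
  also have "(U * rdiag n a) * (rdiag n b * adj U) = U * (rdiag n a * (rdiag n b * adj U))" by (rule assoc_n[OF Uc D1 mult_n[OF D2 aU]])
  also have "rdiag n a * (rdiag n b * adj U) = (rdiag n a * rdiag n b) * adj U" by (rule assoc_n[OF D1 D2 aU, symmetric])
  also have "U * ((rdiag n a * rdiag n b) * adj U) = U * (rdiag n a * rdiag n b) * adj U" by (rule assoc_n[OF Uc mult_n[OF D1 D2] aU, symmetric])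
  finally show ?thesis by (simp add: rdiag_mult)
qed

lemma udu_pow:
  assumes U: "unitary_mat n U"
  shows "(U * rdiag n l * adj U) ^\<^sub>m d = U * rdiag n (\<lambda>i. l i ^ d) * adj U"
proof (induct d)
  case 0
  have Uc: "U \<in> carrier_mat n n" using U by (simp add: unitary_mat_def)
  have "U * rdiag n (\<lambda>i. l i ^ 0) * adj U = U * adj U" using Uc by (simp add: rdiag_one)
  also have "\<dots> = 1\<^sub>m n" using U by (simp add: unitary_mat_def)
  finally show ?case using Uc by simp
next
  case (Suc d)
  have "(U * rdiag n l * adj U) ^\<^sub>m Suc d = (U * rdiag n l * adj U) ^\<^sub>m d * (U * rdiag n l * adj U)" by simp
  also have "\<dots> = U * rdiag n (\<lambda>i. l i ^ d * l i) * adj U" unfolding Suc by (rule udu_mult[OF U])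
  finally show ?case by (simp add: mult.commute)
qed

lemma mat_fun_orthmat:
  fixes lam :: "'k \<Rightarrow> real"
  assumes fin: "finite K" and on: "orthonormal n K v" and f0: "f 0 = 0"
  shows "mat_fun f (orthmat n K (\<lambda>k. complex_of_real (lam k)) v) = orthmat n K (\<lambda>k. complex_of_real (f (lam k))) v"
proof -
  let ?M = "orthmat n K (\<lambda>k. complex_of_real (lam k)) v"
  have Mc: "?M \<in> carrier_mat n n" by simp
  have hM: "adj ?M = ?M" by (rule orthmat_adj) simp
  obtain U0 l0 where U0: "unitary_mat n U0" and M0: "?M = U0 * rdiag n l0 * adj U0"
    using spectral_hermitian[OF Mc hM] by blast
  have "spec_decomp ?M U0 l0" unfolding spec_decomp_def orthmat_dims using U0 M0 by blast
  then have ex: "\<exists>x. (\<lambda>(U, l). spec_decomp ?M U l) x" by auto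
  define X where "X = (SOME (U, l). spec_decomp ?M U l)"
  have "(\<lambda>(U, l). spec_decomp ?M U l) X" unfolding X_def by (rule someI_ex[OF ex])
  then obtain U l where X: "X = (U, l)" and sd: "spec_decomp ?M U l" by (cases X) auto
  have U: "unitary_mat n U" and Md: "?M = U * rdiag n l * adj U" using sd by (auto simp: spec_decomp_def)
  have Uc: "U \<in> carrier_mat n n" using U by (simp add: unitary_mat_def)
  have mf: "mat_fun f ?M = U * rdiag n (\<lambda>i. f (l i)) * adj U"
    unfolding mat_fun_def X_def[symmetric] X by simp
  define S where "S = l ` {..<n} \<union> lam ` K \<union> {0}"
  obtain q where q: "\<forall>x\<in>S. poly q x = f x"
    using interp_poly[of S f] fin by (auto simp: S_def)
  define c where "c d = complex_of_real (coeff q d)" for d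
  have c0: "c 0 = 0" using q f0 by (simp add: c_def S_def poly_0_coeff_0)
  have polyc: "complex_of_real (f x) = (\<Sum>d\<le>degree q. c d * complex_of_real x ^ d)" if "x \<in> S" for x
  proof -
    have "complex_of_real (f x) = complex_of_real (poly q x)" using q that by simp
    also have "\<dots> = (\<Sum>d\<le>degree q. c d * complex_of_real x ^ d)" by (simp add: poly_altdef c_def)
    finally show ?thesis .
  qed
  have pw: "c d * (?M ^\<^sub>m d) $$ (i, j) = c d * (\<Sum>k\<in>K. complex_of_real (lam k) ^ d * v k i * cnj (v k j))"
    if ij: "i < n" "j < n" for d i j
  proof (cases "d = 0")
    case True then show ?thesis using c0 by simp
  next
    case False
    then have "?M ^\<^sub>m d = orthmat n K (\<lambda>k. complex_of_real (lam k) ^ d) v"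
      by (intro orthmat_pow[OF fin on]) auto
    then show ?thesis using ij by (simp add: orthmat_index)
  qed
  show ?thesis
  proof (rule eq_matI)
    fix i j assume "i < dim_row (orthmat n K (\<lambda>k. complex_of_real (f (lam k))) v)"
      "j < dim_col (orthmat n K (\<lambda>k. complex_of_real (f (lam k))) v)"
    then have ij: "i < n" "j < n" by auto
    have "mat_fun f ?M $$ (i, j) = (\<Sum>r<n. U $$ (i, r) * complex_of_real (f (l r)) * cnj (U $$ (j, r)))"
      unfolding mf by (rule udu_entry[OF Uc Uc ij])
    also have "\<dots> = (\<Sum>r<n. U $$ (i, r) * (\<Sum>d\<le>degree q. c d * complex_of_real (l r) ^ d) * cnj (U $$ (j, r)))"
      by (intro sum.cong refl) (subst polyc, auto simp: S_def)
    also have "\<dots> = (\<Sum>r<n. \<Sum>d\<le>degree q. c d * (U $$ (i, r) * complex_of_real (l r ^ d) * cnj (U $$ (j, r))))"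
      by (intro sum.cong refl) (simp add: sum_distrib_left sum_distrib_right algebra_simps)
    also have "\<dots> = (\<Sum>d\<le>degree q. \<Sum>r<n. c d * (U $$ (i, r) * complex_of_real (l r ^ d) * cnj (U $$ (j, r))))"
      by (rule sum.swap)
    also have "\<dots> = (\<Sum>d\<le>degree q. c d * (U * rdiag n (\<lambda>r. l r ^ d) * adj U) $$ (i, j))"
      by (intro sum.cong refl) (simp add: udu_entry[OF Uc Uc ij] sum_distrib_left)
    also have "\<dots> = (\<Sum>d\<le>degree q. c d * (?M ^\<^sub>m d) $$ (i, j))"
      by (simp add: Md udu_pow[OF U])
    also have "\<dots> = (\<Sum>d\<le>degree q. c d * (\<Sum>k\<in>K. complex_of_real (lam k) ^ d * v k i * cnj (v k j)))"
      by (intro sum.cong refl) (rule pw[OF ij])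
    also have "\<dots> = (\<Sum>k\<in>K. \<Sum>d\<le>degree q. c d * complex_of_real (lam k) ^ d * v k i * cnj (v k j))"
      by (simp add: sum_distrib_left algebra_simps) (rule sum.swap)
    also have "\<dots> = (\<Sum>k\<in>K. complex_of_real (f (lam k)) * v k i * cnj (v k j))"
    proof (intro sum.cong refl)
      fix k assume k: "k \<in> K"
      have "complex_of_real (f (lam k)) = (\<Sum>d\<le>degree q. c d * complex_of_real (lam k) ^ d)"
        using k by (intro polyc) (auto simp: S_def)
      then show "(\<Sum>d\<le>degree q. c d * complex_of_real (lam k) ^ d * v k i * cnj (v k j)) =
          complex_of_real (f (lam k)) * v k i * cnj (v k j)"
        by (simp add: sum_distrib_right)
    qed
    also have "\<dots> = orthmat n K (\<lambda>k. complex_of_real (f (lam k))) v $$ (i, j)"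
      using ij by (simp add: orthmat_index)
    finally show "mat_fun f ?M $$ (i, j) = orthmat n K (\<lambda>k. complex_of_real (f (lam k))) v $$ (i, j)" .
  qed (use Uc in \<open>simp_all add: mf\<close>)
qed




lemma sum_split: "(\<Sum>s<m*n. f s) = (\<Sum>u<m. \<Sum>v<n. f (u*n+v::nat))"
proof -
  have "(\<Sum>s<m*n. f s) = (\<Sum>(u,v)\<in>{..<m}\<times>{..<n}. f (u*n+v))"
  proof (rule sum.reindex_bij_witness[where i="\<lambda>(u,v). u*n+v" and j="\<lambda>s. (s div n, s mod n)"])
    fix s assume s: "s \<in> {..<m*n}"
    then have n: "n > 0" by (cases n) auto
    show "(case (s div n, s mod n) of (u, v) \<Rightarrow> u * n + v) = s" by simp
    show "(s div n, s mod n) \<in> {..<m}\<times>{..<n}" using s n by (auto simp: less_mult_imp_div_less)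
  next
    fix a assume a: "a \<in> {..<m}\<times>{..<n}"
    then obtain u v where uv: "a = (u, v)" "u < m" "v < n" by auto
    have "u * n + v < (u + 1) * n" using uv by simp
    also have "\<dots> \<le> m * n" using uv by (intro mult_right_mono) auto
    finally have lt: "u * n + v < m * n" .
    show "(case a of (u, v) \<Rightarrow> u * n + v) \<in> {..<m*n}" using uv lt by simp
    show "((case a of (u, v) \<Rightarrow> u * n + v) div n, (case a of (u, v) \<Rightarrow> u * n + v) mod n) = a"
      using uv by simp
  qed (simp)
  then show ?thesis by (simp add: sum.cartesian_product)
qed

lemma mod_add_inj: "k < p \<Longrightarrow> k' < p \<Longrightarrow> (k + x) mod p = (k' + x) mod (p::nat) \<Longrightarrow> k = k'"
  by (metis cong_def cong_add_rcancel_nat mod_less)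

lemma sum_shift_mod:
  assumes p: "0 < (p::nat)"
  shows "(\<Sum>y<p. g ((y + c) mod p)) = (\<Sum>y<p. g y)"
proof -
  have inj: "inj_on (\<lambda>y. (y + c) mod p) {..<p}"
    by (auto simp: inj_on_def intro: mod_add_inj)
  have img: "(\<lambda>y. (y + c) mod p) ` {..<p} = {..<p}"
    by (rule endo_inj_surj) (use inj p in auto)
  show ?thesis using sum.reindex[OF inj, of g] img by simp
qed

lemma refl_val: "x < (p::nat) \<Longrightarrow> (p - x) mod p = (if x = 0 then 0 else p - x)"
  by auto

lemma sum_refl_mod:
  assumes p: "0 < (p::nat)"
  shows "(\<Sum>y<p. g ((p - y) mod p)) = (\<Sum>y<p. g y)"
proof -
  have inj: "inj_on (\<lambda>y. (p - y) mod p) {..<p}"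
  proof (rule inj_onI)
    fix x y assume x: "x \<in> {..<p}" and y: "y \<in> {..<p}" and e: "(p - x) mod p = (p - y) mod p"
    then show "x = y" using refl_val[of x p] refl_val[of y p] by (auto split: if_splits)
  qed
  have img: "(\<lambda>y. (p - y) mod p) ` {..<p} = {..<p}"
    by (rule endo_inj_surj) (use inj p in auto)
  show ?thesis using sum.reindex[OF inj, of g] img by simp
qed


context
  fixes p :: nat
  assumes p1: "1 < p"
begin

private lemma p0_0: "0 < p" using p1 by simp

lemma om_pow: "omega p ^ k = cis (2 * pi * real k / real p)"
  by (simp add: omega_def Complex.DeMoivre algebra_simps)

lemma om_p: "omega p ^ p = 1"
  using p0_0 by (simp add: om_pow)

lemma om_mod: "omega p ^ k = omega p ^ (k mod p)"
proof -
  have "omega p ^ k = omega p ^ (p * (k div p) + k mod p)" by simp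
  also have "\<dots> = (omega p ^ p) ^ (k div p) * omega p ^ (k mod p)" by (simp only: power_add power_mult)
  finally show ?thesis by (simp add: om_p)
qed

lemma om_cong: "k mod p = m mod p \<Longrightarrow> omega p ^ k = omega p ^ m"
  by (metis om_mod)

lemma om_norm: "cnj (omega p ^ k) * omega p ^ k = 1"
  by (simp add: om_pow cis_cnj cis_mult)

lemma om_norm': "omega p ^ k * cnj (omega p ^ k) = 1"
  using om_norm[of k] by (simp add: mult.commute)

lemma om_ne1: assumes "0 < k" "k < p" shows "omega p ^ k \<noteq> 1"
proof
  assume "omega p ^ k = 1"
  then have "cos (2 * pi * real k / real p) = 1" unfolding om_pow
    by (metis Re_complex_of_real cis.sel(1) one_complex.sel(1))
  then obtain n :: int where n: "2 * pi * real k / real p = of_int n * 2 * pi"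
    using cos_one_2pi_int by blast
  have "real k / real p = (2 * pi * real k / real p) / (2 * pi)" by simp
  also have "\<dots> = (of_int n * 2 * pi) / (2 * pi)" by (simp only: n)
  also have "\<dots> = of_int n" by simp
  finally have "real k / real p = of_int n" .
  then have "real k = of_int n * real p" using p0_0 by (simp add: field_simps)
  moreover have "0 < real k" "real k < real p" using assms by auto
  ultimately have "0 < of_int n * real p" "of_int n * real p < 1 * real p" by auto
  then have "0 < n" "n < 1" using p0_0
    by (auto simp: zero_less_mult_iff mult_less_cancel_right)
  then show False by simp
qed

lemma om_sum: "(\<Sum>b<p. omega p ^ (k * b)) = (if k mod p = 0 then of_nat p else 0)"
proof (cases "k mod p = 0")
  case True
  have "omega p ^ (k * b) = 1" for b
  proof -
    have "k * b mod p = 0 mod p" using True by (metis mod_mult_left_eq mult_zero_left mod_0)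
    then show ?thesis using om_cong[of "k * b" 0] by simp
  qed
  then show ?thesis using True by simp
next
  case False
  let ?w = "omega p ^ k"
  have w1: "?w \<noteq> 1" using om_mod[of k] om_ne1[of "k mod p"] False p0_0 by simp
  have wp: "?w ^ p = 1" by (metis mult.commute om_p power_mult power_one)
  have "(\<Sum>b<p. omega p ^ (k * b)) = (\<Sum>b<p. ?w ^ b)" by (simp add: power_mult)
  also have "\<dots> = 0" using w1 wp by (simp add: sum_gp_strict)
  finally show ?thesis using False by simp
qed

lemma cnj_om: "cnj (omega p ^ m) = omega p ^ ((p - m mod p) mod p)"
proof -
  have "omega p ^ m * omega p ^ ((p - m mod p) mod p) = 1"
  proof -
    have "omega p ^ m * omega p ^ ((p - m mod p) mod p) = omega p ^ (m + (p - m mod p) mod p)" by (simp add: power_add)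
    also have "\<dots> = omega p ^ 0"
    proof (rule om_cong)
      have "(m + (p - m mod p) mod p) mod p = (m mod p + (p - m mod p)) mod p" by (simp only: mod_add_right_eq mod_add_left_eq)
      also have "m mod p + (p - m mod p) = p" using p0_0 by (simp add: le_add_diff_inverse less_imp_le)
      finally show "(m + (p - m mod p) mod p) mod p = 0 mod p" by simp
    qed
    finally show ?thesis by simp
  qed
  then have "cnj (omega p ^ m) = cnj (omega p ^ m) * (omega p ^ m * omega p ^ ((p - m mod p) mod p))"
    by (simp only: mult_1_right)
  also have "\<dots> = (cnj (omega p ^ m) * omega p ^ m) * omega p ^ ((p - m mod p) mod p)" by (simp only: mult.assoc)
  also have "\<dots> = omega p ^ ((p - m mod p) mod p)" by (simp only: om_norm mult_1_left)
  finally show ?thesis .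
qed

lemma Xop_carrier[simp]: "Xop p \<in> carrier_mat p p" by (simp add: Xop_def)
lemma Zop_carrier[simp]: "Zop p \<in> carrier_mat p p" by (simp add: Zop_def)
lemma Xop_dims[simp]: "dim_row (Xop p) = p" "dim_col (Xop p) = p" by (simp_all add: Xop_def)
lemma Zop_dims[simp]: "dim_row (Zop p) = p" "dim_col (Zop p) = p" by (simp_all add: Zop_def)
lemma Wop_carrier[simp]: "Wop p x z \<in> carrier_mat p p"
  unfolding Wop_def by (rule mult_carrier_mat[OF pow_carrier_mat[OF Xop_carrier] pow_carrier_mat[OF Zop_carrier]])
lemma Wop_dims[simp]: "dim_row (Wop p x z) = p" "dim_col (Wop p x z) = p" using carrier_matD[OF Wop_carrier[of x z]] by auto

lemma X_pow_index: "i < p \<Longrightarrow> j < p \<Longrightarrow> (Xop p ^\<^sub>m x) $$ (i, j) = (if i = (j + x) mod p then 1 else 0)"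
proof (induct x arbitrary: i j)
  case 0 then show ?case by (simp add: Xop_def)
next
  case (Suc x)
  have "(Xop p ^\<^sub>m Suc x) $$ (i, j) = (Xop p ^\<^sub>m x * Xop p) $$ (i, j)" by simp
  also have "\<dots> = (\<Sum>k<p. (Xop p ^\<^sub>m x) $$ (i, k) * Xop p $$ (k, j))"
    using Suc by (intro mult_entry[of _ p p _ p]) auto
  also have "\<dots> = (\<Sum>k<p. (if i = (k + x) mod p then 1 else 0) * (if k = (j + 1) mod p then 1 else 0))"
    using Suc by (intro sum.cong refl) (simp add: Xop_def)
  also have "\<dots> = (if i = ((j + 1) mod p + x) mod p then 1 else 0)"
    using p0_0 by (subst delta_sum_r) auto
  also have "((j + 1) mod p + x) mod p = (j + Suc x) mod p" by (simp add: mod_add_left_eq)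
  finally show ?case .
qed

lemma Z_pow_index: "i < p \<Longrightarrow> j < p \<Longrightarrow> (Zop p ^\<^sub>m z) $$ (i, j) = (if i = j then omega p ^ (j * z) else 0)"
proof (induct z arbitrary: i j)
  case 0 then show ?case by simp
next
  case (Suc z)
  have "(Zop p ^\<^sub>m Suc z) $$ (i, j) = (Zop p ^\<^sub>m z * Zop p) $$ (i, j)" by simp
  also have "\<dots> = (\<Sum>k<p. (Zop p ^\<^sub>m z) $$ (i, k) * Zop p $$ (k, j))"
    using Suc by (intro mult_entry[of _ p p _ p]) auto
  also have "\<dots> = (\<Sum>k<p. (omega p ^ (i * z) * omega p ^ j) * (if k = i then 1 else 0) * (if k = j then 1 else 0))"
    using Suc by (intro sum.cong refl) (auto simp: Zop_def)
  also have "\<dots> = (if i = j then omega p ^ (j * Suc z) else 0)"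
    using Suc by (subst delta_sum_r) (auto simp: power_add mult.commute)
  finally show ?case .
qed

lemma W_index: "i < p \<Longrightarrow> j < p \<Longrightarrow> Wop p x z $$ (i, j) = (if i = (j + x) mod p then omega p ^ (z * j) else 0)"
proof -
  assume ij: "i < p" "j < p"
  have "Wop p x z $$ (i, j) = (\<Sum>k<p. (Xop p ^\<^sub>m x) $$ (i, k) * (Zop p ^\<^sub>m z) $$ (k, j))"
    unfolding Wop_def using ij by (intro mult_entry[of _ p p _ p] pow_carrier_mat) auto
  also have "\<dots> = (\<Sum>k<p. ((Xop p ^\<^sub>m x) $$ (i, k) * omega p ^ (j * z)) * (if k = j then 1 else 0))"
    using ij by (intro sum.cong refl) (auto simp: Z_pow_index)
  also have "\<dots> = (Xop p ^\<^sub>m x) $$ (i, j) * omega p ^ (j * z)" using ij by (subst delta_sum_r) auto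
  finally show ?thesis using ij by (simp add: X_pow_index mult.commute)
qed

lemma W_col_orth:
  assumes "k < p" "k' < p" "x < p"
  shows "(\<Sum>a<p. Wop p x z $$ (a, k) * cnj (Wop p x z $$ (a, k'))) = (if k = k' then 1 else 0)"
proof -
  have "(\<Sum>a<p. Wop p x z $$ (a, k) * cnj (Wop p x z $$ (a, k')))
      = (\<Sum>a<p. (if (k + x) mod p = (k' + x) mod p then omega p ^ (z * k) * cnj (omega p ^ (z * k')) else 0)
                * (if a = (k + x) mod p then 1 else 0))"
    using assms by (intro sum.cong refl) (auto simp: W_index)
  also have "\<dots> = (if (k + x) mod p = (k' + x) mod p then omega p ^ (z * k) * cnj (omega p ^ (z * k')) else 0)"
    using p0_0 by (subst delta_sum_r) auto
  also have "\<dots> = (if k = k' then 1 else 0)"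
    using assms mod_add_inj[of k p k' x] om_norm'[of "z * k'"] by (auto simp del: complex_cnj_power)
  finally show ?thesis .
qed

lemma W_row_sum:
  assumes b: "b < p" and x: "x < p"
  shows "(\<Sum>b1<p. Wop p x z $$ (b, b1) * f b1) = omega p ^ (z * ((b + p - x) mod p)) * f ((b + p - x) mod p)"
proof -
  let ?c = "(b + p - x) mod p"
  have c: "?c < p" using p0_0 by simp
  have cx: "(?c + x) mod p = b"
  proof -
    have "(?c + x) mod p = (b + p - x + x) mod p" by (simp add: mod_add_left_eq)
    also have "b + p - x + x = b + p" using x by simp
    finally show ?thesis using b by simp
  qed
  have eq: "b = (b1 + x) mod p \<longleftrightarrow> b1 = ?c" if "b1 < p" for b1
    using that c cx mod_add_inj[of b1 p ?c x] by auto
  have "(\<Sum>b1<p. Wop p x z $$ (b, b1) * f b1) = (\<Sum>b1<p. (omega p ^ (z * b1) * f b1) * (if b1 = ?c then 1 else 0))"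
    using b eq by (intro sum.cong refl) (auto simp: W_index)
  also have "\<dots> = omega p ^ (z * ?c) * f ?c" using c by (subst delta_sum_r) auto
  finally show ?thesis .
qed

lemma cnj_om_pow: "z' < p \<Longrightarrow> cnj (omega p ^ (z' * b)) = omega p ^ ((p - z') * b)"
proof -
  assume z': "z' < p"
  have "omega p ^ (z' * b) * omega p ^ ((p - z') * b) = omega p ^ (p * b)"
    using z' by (simp add: power_add[symmetric] add_mult_distrib[symmetric])
  also have "\<dots> = 1" by (simp add: power_mult om_p)
  finally have E: "omega p ^ (z' * b) * omega p ^ ((p - z') * b) = 1" .
  have "cnj (omega p ^ (z' * b)) = cnj (omega p ^ (z' * b)) * (omega p ^ (z' * b) * omega p ^ ((p - z') * b))"
    by (simp only: E mult_1_right)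
  also have "\<dots> = (cnj (omega p ^ (z' * b)) * omega p ^ (z' * b)) * omega p ^ ((p - z') * b)" by (simp only: mult.assoc)
  also have "\<dots> = omega p ^ ((p - z') * b)" by (simp only: om_norm mult_1_left)
  finally show ?thesis .
qed

lemma om_prod_aux: "z' < p \<Longrightarrow> omega p ^ (z * b) * cnj (omega p ^ (z' * b)) = omega p ^ ((z + (p - z')) * b)"
  by (simp only: cnj_om_pow power_add[symmetric] add_mult_distrib[symmetric])

lemma W_hs_orth:
  assumes "x < p" "z < p" "x' < p" "z' < p"
  shows "(\<Sum>a<p. \<Sum>b<p. Wop p x z $$ (a, b) * cnj (Wop p x' z' $$ (a, b))) = (if x = x' \<and> z = z' then of_nat p else 0)"
proof -
  have "(\<Sum>a<p. \<Sum>b<p. Wop p x z $$ (a, b) * cnj (Wop p x' z' $$ (a, b)))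
      = (\<Sum>b<p. \<Sum>a<p. Wop p x z $$ (a, b) * cnj (Wop p x' z' $$ (a, b)))" by (rule sum.swap)
  also have "\<dots> = (\<Sum>b<p. if x = x' then omega p ^ ((z + (p - z')) * b) else 0)"
  proof (intro sum.cong refl)
    fix b assume b: "b \<in> {..<p}"
    have "(\<Sum>a<p. Wop p x z $$ (a, b) * cnj (Wop p x' z' $$ (a, b)))
        = (\<Sum>a<p. (if (b + x) mod p = (b + x') mod p then omega p ^ (z * b) * cnj (omega p ^ (z' * b)) else 0)
                * (if a = (b + x) mod p then 1 else 0))"
      using assms b by (intro sum.cong refl) (auto simp: W_index)
    also have "\<dots> = (if (b + x) mod p = (b + x') mod p then omega p ^ (z * b) * cnj (omega p ^ (z' * b)) else 0)"
      using p0_0 by (subst delta_sum_r) auto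
    also have "\<dots> = (if x = x' then omega p ^ ((z + (p - z')) * b) else 0)"
      using assms mod_add_inj[of x p x' b] om_prod_aux[of z' z b]
      by (auto simp del: complex_cnj_power simp: add.commute)
    finally show "(\<Sum>a<p. Wop p x z $$ (a, b) * cnj (Wop p x' z' $$ (a, b))) = (if x = x' then omega p ^ ((z + (p - z')) * b) else 0)" .
  qed
  also have "\<dots> = (if x = x' then (\<Sum>b<p. omega p ^ ((z + (p - z')) * b)) else 0)" by simp
  also have "\<dots> = (if x = x' \<and> z = z' then of_nat p else 0)"
  proof -
    have "(z + (p - z')) mod p = 0 \<longleftrightarrow> z = z'"
    proof
      assume m0: "(z + (p - z')) mod p = 0"
      show "z = z'"
      proof (cases "z' \<le> z")
        case True
        then have "z + (p - z') = (z - z') + p" using assms by simp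
        then have "(z - z') mod p = 0" using m0 by simp
        then show ?thesis using True assms by simp
      next
        case False
        then have "z + (p - z') < p" "0 < z + (p - z')" using assms by auto
        then show ?thesis using m0 by simp
      qed
    qed (use assms in simp)
    then show ?thesis using om_sum[of "z + (p - z')"] by auto
  qed
  finally show ?thesis .
qed

lemma W_T:
  assumes a: "a < p" and b: "b < p" and x: "x < p" and x0: "x0 < p"
  shows "(\<Sum>b1<p. Wop p x z $$ (b, b1) * Wop p x0 z0 $$ (a, b1))
       = cnj (omega p ^ ((z + z0) * x)) * Wop p ((x0 + p - x) mod p) ((z + z0) mod p) $$ (a, b)"
proof -
  let ?c = "(b + p - x) mod p"
  let ?al = "(x0 + p - x) mod p"
  let ?be = "(z + z0) mod p"
  let ?\<zeta> = "omega p ^ ((z + z0) * x)"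
  have c: "?c < p" using p0_0 by simp
  have cx: "(?c + x) mod p = b"
  proof -
    have "(?c + x) mod p = (b + p - x + x) mod p" by (simp add: mod_add_left_eq)
    also have "b + p - x + x = b + p" using x by simp
    finally show ?thesis using b by simp
  qed
  have cond: "(?c + x0) mod p = (b + ?al) mod p"
  proof -
    have "(?c + x0) mod p = (b + p - x + x0) mod p" by (simp add: mod_add_left_eq)
    also have "b + p - x + x0 = b + (x0 + p - x)" using x by simp
    also have "(b + (x0 + p - x)) mod p = (b + ?al) mod p" by (simp add: mod_add_right_eq)
    finally show ?thesis .
  qed
  have cg: "[(z + z0) * (x + ?c) = ?be * b] (mod p)"
  proof (rule cong_mult)
    show "[z + z0 = ?be] (mod p)" by (simp add: cong_def)
    show "[x + ?c = b] (mod p)" using cx b by (simp add: cong_def add.commute)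
  qed
  have ph: "omega p ^ (z * ?c) * omega p ^ (z0 * ?c) = cnj ?\<zeta> * omega p ^ (?be * b)"
  proof -
    have "omega p ^ (z * ?c) * omega p ^ (z0 * ?c) = omega p ^ ((z + z0) * ?c)"
      by (simp add: power_add add_mult_distrib)
    also have "\<dots> = (cnj ?\<zeta> * ?\<zeta>) * omega p ^ ((z + z0) * ?c)" by (simp only: om_norm mult_1_left)
    also have "\<dots> = cnj ?\<zeta> * omega p ^ ((z + z0) * (x + ?c))"
      by (simp only: mult.assoc power_add[symmetric] add_mult_distrib2)
    also have "omega p ^ ((z + z0) * (x + ?c)) = omega p ^ (?be * b)"
      using cg by (intro om_cong) (simp add: cong_def)
    finally show ?thesis .
  qed
  have "(\<Sum>b1<p. Wop p x z $$ (b, b1) * Wop p x0 z0 $$ (a, b1)) = omega p ^ (z * ?c) * Wop p x0 z0 $$ (a, ?c)"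
    by (rule W_row_sum[OF b x])
  also have "\<dots> = (if a = (?c + x0) mod p then omega p ^ (z * ?c) * omega p ^ (z0 * ?c) else 0)"
    using a c by (simp add: W_index)
  also have "\<dots> = (if a = (b + ?al) mod p then cnj ?\<zeta> * omega p ^ (?be * b) else 0)"
    using cond ph by simp
  also have "\<dots> = cnj ?\<zeta> * Wop p ?al ?be $$ (a, b)"
    using a b by (simp add: W_index)
  finally show ?thesis .
qed

end




definition bellv :: "nat \<Rightarrow> nat \<times> nat \<Rightarrow> nat \<Rightarrow> complex" where
  "bellv q = (\<lambda>(\<alpha>, \<beta>) i. Wop q \<alpha> \<beta> $$ (i div q, i mod q) * complex_of_real (1 / sqrt (real q)))"

lemma idx_lt: "u < (m::nat) \<Longrightarrow> v < n \<Longrightarrow> u * n + v < m * n"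
proof -
  assume uv: "u < m" "v < n"
  have "u * n + v < (u + 1) * n" using uv by simp
  also have "\<dots> \<le> m * n" using uv by (intro mult_right_mono) auto
  finally show ?thesis .
qed

lemma kron_carrier[simp]: "A \<in> carrier_mat m1 n1 \<Longrightarrow> B \<in> carrier_mat m2 n2 \<Longrightarrow> kron A B \<in> carrier_mat (m1 * m2) (n1 * n2)"
  unfolding carrier_mat_def by (simp add: kron_def)

lemma kron_dims[simp]: "dim_row (kron A B) = dim_row A * dim_row B" "dim_col (kron A B) = dim_col A * dim_col B"
  by (simp_all add: kron_def)

lemma kron_index:
  assumes A: "A \<in> carrier_mat m1 n1" and B: "B \<in> carrier_mat m2 n2"
    and "u < m1" "v < m2" "u' < n1" "v' < n2"
  shows "kron A B $$ (u * m2 + v, u' * n2 + v') = A $$ (u, u') * B $$ (v, v')"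
  using assms idx_lt[of u m1 v m2] idx_lt[of u' n1 v' n2] by (auto simp: kron_def)

lemma kron_index_col:
  assumes A: "A \<in> carrier_mat m1 1" and B: "B \<in> carrier_mat m2 1"
    and "u < m1" "v < m2"
  shows "kron A B $$ (u * m2 + v, 0) = A $$ (u, 0) * B $$ (v, 0)"
  using kron_index[OF A B assms(3,4), of 0 0] by simp

lemma ifz_l: "(if P then x else 0) * y = (if P then x * y else (0::'a::mult_zero))" by simp
lemma ifz_r: "y * (if P then x else 0) = (if P then y * x else (0::'a::mult_zero))" by simp

lemma smult_idx: "A \<in> carrier_mat n m \<Longrightarrow> i < n \<Longrightarrow> j < m \<Longrightarrow> (c \<cdot>\<^sub>m A) $$ (i, j) = c * A $$ (i, j)"
  by auto

lemma sum_delta2: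
  assumes "x0 < (m::nat)" "z0 < (n::nat)"
  shows "(\<Sum>x<m. \<Sum>z<n. if x = x0 \<and> z = z0 then f x z else 0) = f x0 z0"
proof -
  have "(\<Sum>z<n. if x = x0 \<and> z = z0 then f x z else 0) = (if x = x0 then f x z0 else 0)" for x
    using assms by (cases "x = x0") (auto simp: sum.delta)
  then show ?thesis using assms by (simp add: sum.delta)
qed

lemma msum_index: "i < n \<Longrightarrow> j < m \<Longrightarrow> msum n m f S $$ (i, j) = (\<Sum>k\<in>S. f k $$ (i, j))"
  by (simp add: msum_def)

context
  fixes p :: nat
  assumes p1: "1 < p"
begin

private lemma p0_1: "0 < p" using p1 by simp

lemmas Wd[simp] = Wop_dims[OF p1] Wop_carrier[OF p1]

lemma Phi_carrier[simp]: "Phi p \<in> carrier_mat (p * p) 1" by (simp add: Phi_def)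

lemma Phi_index: "u < p \<Longrightarrow> v < p \<Longrightarrow> Phi p $$ (u * p + v, 0) = (if u = v then complex_of_real (1 / sqrt (real p)) else 0)"
  using idx_lt[of u p v p] by (simp add: Phi_def)

lemma V_index:
  assumes a: "a < p" and b: "b < p"
  shows "(kron (Wop p x z) (1\<^sub>m p) * Phi p) $$ (a * p + b, 0) = Wop p x z $$ (a, b) * complex_of_real (1 / sqrt (real p))"
proof -
  have K: "kron (Wop p x z) (1\<^sub>m p) \<in> carrier_mat (p * p) (p * p)" using Wop_carrier[OF p1] by simp
  have "(kron (Wop p x z) (1\<^sub>m p) * Phi p) $$ (a * p + b, 0)
      = (\<Sum>s<p * p. kron (Wop p x z) (1\<^sub>m p) $$ (a * p + b, s) * Phi p $$ (s, 0))"
    by (rule mult_entry[OF K Phi_carrier]) (use idx_lt[OF a b] in auto)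
  also have "\<dots> = (\<Sum>u<p. \<Sum>v<p. kron (Wop p x z) (1\<^sub>m p) $$ (a * p + b, u * p + v) * Phi p $$ (u * p + v, 0))"
    by (rule sum_split)
  also have "\<dots> = (\<Sum>u<p. \<Sum>v<p. Wop p x z $$ (a, u) * (if b = v then 1 else 0) * (if u = v then complex_of_real (1 / sqrt (real p)) else 0))"
    using a b by (intro sum.cong refl) (simp add: kron_index[OF Wop_carrier[OF p1] one_carrier_mat] Phi_index)
  also have "\<dots> = (\<Sum>u<p. Wop p x z $$ (a, u) * (if u = b then complex_of_real (1 / sqrt (real p)) else 0))"
    using b by (intro sum.cong refl) (simp add: ifz_l ifz_r)
  also have "\<dots> = Wop p x z $$ (a, b) * complex_of_real (1 / sqrt (real p))"
    using b by (simp add: ifz_r)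
  finally show ?thesis .
qed

lemma V_carrier: "kron (Wop p x z) (1\<^sub>m p) * Phi p \<in> carrier_mat (p * p) 1"
  by (rule mult_carrier_mat[OF kron_carrier[OF Wop_carrier[OF p1] one_carrier_mat] Phi_carrier])

lemma V_dims[simp]: "dim_row (kron (Wop p x z) (1\<^sub>m p) * Phi p) = p * p" "dim_col (kron (Wop p x z) (1\<^sub>m p) * Phi p) = 1"
  using carrier_matD[OF V_carrier] by auto

lemma ket_dims[simp]: "dim_row (ket n k) = n" "dim_col (ket n k) = 1" by (simp_all add: ket_def)

lemma ket_carrier[simp]: "ket n k \<in> carrier_mat n 1" by (simp add: ket_def)

lemma Psi_carrier: "Psi p P \<in> carrier_mat (p * p * (p * p)) 1" by (simp add: Psi_def msum_def)

lemma Psi_index: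
  assumes a: "a < p" and b: "b < p" and x0: "x0 < p" and z0: "z0 < p"
  shows "Psi p P $$ ((a * p + b) * (p * p) + (x0 * p + z0), 0)
       = complex_of_real (sqrt (P x0 z0)) * Wop p x0 z0 $$ (a, b) * complex_of_real (1 / sqrt (real p))"
proof -
  have q: "a * p + b < p * p" using idx_lt[OF a b] .
  have e: "x0 * p + z0 < p * p" using idx_lt[OF x0 z0] .
  have r: "(a * p + b) * (p * p) + (x0 * p + z0) < p * p * (p * p)" using idx_lt[OF q e] .
  have "Psi p P $$ ((a * p + b) * (p * p) + (x0 * p + z0), 0)
      = (\<Sum>(x, z)\<in>{..<p} \<times> {..<p}. complex_of_real (sqrt (P x z)) *
          (kron (kron (Wop p x z) (1\<^sub>m p) * Phi p) (ket (p * p) (x * p + z))) $$ ((a * p + b) * (p * p) + (x0 * p + z0), 0))"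
    unfolding Psi_def using r
    by (subst msum_index) (auto intro!: sum.cong simp: case_prod_beta smult_idx[OF kron_carrier[OF V_carrier ket_carrier]])
  also have "\<dots> = (\<Sum>(x, z)\<in>{..<p} \<times> {..<p}. complex_of_real (sqrt (P x z)) *
          ((Wop p x z $$ (a, b) * complex_of_real (1 / sqrt (real p))) * (if x0 * p + z0 = x * p + z then 1 else 0)))"
  proof (intro sum.cong refl, clarify)
    fix x z
    have "kron (kron (Wop p x z) (1\<^sub>m p) * Phi p) (ket (p * p) (x * p + z)) $$ ((a * p + b) * (p * p) + (x0 * p + z0), 0)
        = (kron (Wop p x z) (1\<^sub>m p) * Phi p) $$ (a * p + b, 0) * ket (p * p) (x * p + z) $$ (x0 * p + z0, 0)"
      by (rule kron_index_col[OF V_carrier ket_carrier q e])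
    then show "complex_of_real (sqrt (P x z)) * kron (kron (Wop p x z) (1\<^sub>m p) * Phi p) (ket (p * p) (x * p + z)) $$ ((a * p + b) * (p * p) + (x0 * p + z0), 0)
       = complex_of_real (sqrt (P x z)) * ((Wop p x z $$ (a, b) * complex_of_real (1 / sqrt (real p))) * (if x0 * p + z0 = x * p + z then 1 else 0))"
      using V_index[OF a b, of x z] e by (simp add: ket_def)
  qed
  also have "\<dots> = (\<Sum>x<p. \<Sum>z<p. complex_of_real (sqrt (P x z)) *
          ((Wop p x z $$ (a, b) * complex_of_real (1 / sqrt (real p))) * (if x = x0 \<and> z = z0 then 1 else 0)))"
  proof -
    have eq: "x0 * p + z0 = x * p + z \<longleftrightarrow> x = x0 \<and> z = z0" if "x < p" "z < p" for x z
      using that x0 z0 by (metis add.commute add_mult_distrib2 mod_mult_self2 mod_less div_mult_self1 div_less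
          add_0 mult.commute p0_1 less_not_refl2 )
    show ?thesis unfolding sum.cartesian_product[symmetric] by (intro sum.cong refl) (auto simp: eq)
  qed
  also have "\<dots> = complex_of_real (sqrt (P x0 z0)) * Wop p x0 z0 $$ (a, b) * complex_of_real (1 / sqrt (real p))"
    using x0 z0 by (simp add: ifz_r sum_delta2)
  finally show ?thesis .
qed

lemma sum_if_out: "(\<Sum>k\<in>S. if P then f k else 0) = (if P then (\<Sum>k\<in>S. f k) else 0)"
  by auto

lemma G_carrier: "kron (kron (1\<^sub>m p) (Wop p x z)) (1\<^sub>m (p * p)) \<in> carrier_mat (p * p * (p * p)) (p * p * (p * p))"
  by (rule kron_carrier[OF kron_carrier[OF one_carrier_mat Wd(3)] one_carrier_mat])

lemma G_index:
  assumes "a < p" "b < p" "a' < p" "b' < p" "e < p * p" "e' < p * p"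
  shows "kron (kron (1\<^sub>m p) (Wop p x z)) (1\<^sub>m (p * p)) $$ ((a * p + b) * (p * p) + e, (a' * p + b') * (p * p) + e')
       = (if a = a' then 1 else 0) * Wop p x z $$ (b, b') * (if e = e' then 1 else 0)"
proof -
  have "kron (kron (1\<^sub>m p) (Wop p x z)) (1\<^sub>m (p * p)) $$ ((a * p + b) * (p * p) + e, (a' * p + b') * (p * p) + e')
      = kron (1\<^sub>m p) (Wop p x z) $$ (a * p + b, a' * p + b') * 1\<^sub>m (p * p) $$ (e, e')"
    by (rule kron_index[OF kron_carrier[OF one_carrier_mat Wd(3)] one_carrier_mat])
       (use assms idx_lt in auto)
  also have "kron (1\<^sub>m p) (Wop p x z) $$ (a * p + b, a' * p + b') = 1\<^sub>m p $$ (a, a') * Wop p x z $$ (b, b')"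
    by (rule kron_index[OF one_carrier_mat Wd(3)]) (use assms in auto)
  finally show ?thesis using assms by simp
qed

lemma phi_index:
  assumes a: "a < p" and b: "b < p" and e: "e < p * p"
  shows "(kron (kron (1\<^sub>m p) (Wop p x z)) (1\<^sub>m (p * p)) * Psi p P) $$ ((a * p + b) * (p * p) + e, 0)
       = (\<Sum>b1<p. Wop p x z $$ (b, b1) * Psi p P $$ ((a * p + b1) * (p * p) + e, 0))"
proof -
  let ?G = "kron (kron (1\<^sub>m p) (Wop p x z)) (1\<^sub>m (p * p))"
  have r: "(a * p + b) * (p * p) + e < p * p * (p * p)" using idx_lt[OF idx_lt[OF a b] e] .
  have "(?G * Psi p P) $$ ((a * p + b) * (p * p) + e, 0)
      = (\<Sum>s<p * p * (p * p). ?G $$ ((a * p + b) * (p * p) + e, s) * Psi p P $$ (s, 0))"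
    by (rule mult_entry[OF G_carrier Psi_carrier r]) simp
  also have "\<dots> = (\<Sum>q<p * p. \<Sum>e'<p * p. ?G $$ ((a * p + b) * (p * p) + e, q * (p * p) + e') * Psi p P $$ (q * (p * p) + e', 0))"
    by (rule sum_split)
  also have "\<dots> = (\<Sum>a'<p. \<Sum>b'<p. \<Sum>e'<p * p. ?G $$ ((a * p + b) * (p * p) + e, (a' * p + b') * (p * p) + e') * Psi p P $$ ((a' * p + b') * (p * p) + e', 0))"
    by (rule sum_split)
  also have "\<dots> = (\<Sum>a'<p. \<Sum>b'<p. \<Sum>e'<p * p. (if a = a' then 1 else 0) * Wop p x z $$ (b, b') * (if e = e' then 1 else 0) * Psi p P $$ ((a' * p + b') * (p * p) + e', 0))"
    using a b e by (intro sum.cong refl) (simp add: G_index)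
  also have "\<dots> = (\<Sum>b1<p. Wop p x z $$ (b, b1) * Psi p P $$ ((a * p + b1) * (p * p) + e, 0))"
    using a b e by (simp add: ifz_l ifz_r sum_if_out sum.delta sum.delta')
  finally show ?thesis .
qed

lemma rank1_conj:
  assumes G: "G \<in> carrier_mat n n" and v: "v \<in> carrier_mat n 1"
  shows "G * (v * adj v) * adj G = (G * v) * adj (G * v)"
proof -
  have av: "adj v \<in> carrier_mat 1 n" and aG: "adj G \<in> carrier_mat n n" using G v by auto
  have "G * (v * adj v) = (G * v) * adj v" by (rule assoc_mult_mat[OF G v av, symmetric])
  moreover have "(G * v) * adj v * adj G = (G * v) * (adj v * adj G)"
    by (rule assoc_mult_mat[OF mult_carrier_mat[OF G v] av aG])
  moreover have "adj v * adj G = adj (G * v)" by (rule adj_mult[OF G v, symmetric])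
  ultimately show ?thesis by simp
qed

lemma omega_index:
  assumes r: "r < p * p * (p * p)" and r': "r' < p * p * (p * p)"
  shows "omega_ABE p P Pt $$ (r, r') = (\<Sum>x<p. \<Sum>z<p. complex_of_real (Pt ((p - x) mod p) z) *
     ((kron (kron (1\<^sub>m p) (Wop p x z)) (1\<^sub>m (p * p)) * Psi p P) $$ (r, 0) *
      cnj ((kron (kron (1\<^sub>m p) (Wop p x z)) (1\<^sub>m (p * p)) * Psi p P) $$ (r', 0))))"
proof -
  have GP: "kron (kron (1\<^sub>m p) (Wop p x z)) (1\<^sub>m (p * p)) * Psi p P \<in> carrier_mat (p * p * (p * p)) 1" for x z
    by (rule mult_carrier_mat[OF G_carrier Psi_carrier])
  have C: "(kron (kron (1\<^sub>m p) (Wop p x z)) (1\<^sub>m (p * p)) * Psi p P) * adj (kron (kron (1\<^sub>m p) (Wop p x z)) (1\<^sub>m (p * p)) * Psi p P)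
      \<in> carrier_mat (p * p * (p * p)) (p * p * (p * p))" for x z
    by (rule mult_carrier_mat[OF GP adj_carrier[OF GP]])
  have "omega_ABE p P Pt $$ (r, r') = (\<Sum>(x, z)\<in>{..<p} \<times> {..<p}. complex_of_real (Pt ((p - x) mod p) z) *
     ((kron (kron (1\<^sub>m p) (Wop p x z)) (1\<^sub>m (p * p)) * Psi p P) * adj (kron (kron (1\<^sub>m p) (Wop p x z)) (1\<^sub>m (p * p)) * Psi p P)) $$ (r, r'))"
    unfolding omega_ABE_def pauli_B_def using r r'
    by (subst msum_index) (auto intro!: sum.cong simp: case_prod_beta smult_idx[OF C] rank1_conj[OF G_carrier Psi_carrier])
  also have "\<dots> = (\<Sum>(x, z)\<in>{..<p} \<times> {..<p}. complex_of_real (Pt ((p - x) mod p) z) *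
     ((kron (kron (1\<^sub>m p) (Wop p x z)) (1\<^sub>m (p * p)) * Psi p P) $$ (r, 0) *
      cnj ((kron (kron (1\<^sub>m p) (Wop p x z)) (1\<^sub>m (p * p)) * Psi p P) $$ (r', 0))))"
  proof (intro sum.cong refl, clarify)
    fix x z
    show "complex_of_real (Pt ((p - x) mod p) z) *
     ((kron (kron (1\<^sub>m p) (Wop p x z)) (1\<^sub>m (p * p)) * Psi p P) * adj (kron (kron (1\<^sub>m p) (Wop p x z)) (1\<^sub>m (p * p)) * Psi p P)) $$ (r, r')
      = complex_of_real (Pt ((p - x) mod p) z) *
     ((kron (kron (1\<^sub>m p) (Wop p x z)) (1\<^sub>m (p * p)) * Psi p P) $$ (r, 0) *
      cnj ((kron (kron (1\<^sub>m p) (Wop p x z)) (1\<^sub>m (p * p)) * Psi p P) $$ (r', 0)))"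
      by (subst entry_mult_adj[OF GP GP r r']) simp
  qed
  finally show ?thesis by (simp add: sum.cartesian_product[symmetric])
qed

lemma om_norm_s: "cnj (omega p) ^ k * omega p ^ k = 1"
  using om_norm[OF p1, of k] by simp

lemma phi_full:
  assumes a: "a < p" and b: "b < p" and x: "x < p" and x0: "x0 < p" and z0: "z0 < p"
  shows "(kron (kron (1\<^sub>m p) (Wop p x z)) (1\<^sub>m (p * p)) * Psi p P) $$ ((a * p + b) * (p * p) + (x0 * p + z0), 0)
       = (complex_of_real (sqrt (P x0 z0)) * complex_of_real (1 / sqrt (real p))) *
         (cnj (omega p ^ ((z + z0) * x)) * Wop p ((x0 + p - x) mod p) ((z + z0) mod p) $$ (a, b))"
proof -
  let ?s = "complex_of_real (sqrt (P x0 z0)) * complex_of_real (1 / sqrt (real p))"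
  have "(kron (kron (1\<^sub>m p) (Wop p x z)) (1\<^sub>m (p * p)) * Psi p P) $$ ((a * p + b) * (p * p) + (x0 * p + z0), 0)
      = (\<Sum>b1<p. Wop p x z $$ (b, b1) * Psi p P $$ ((a * p + b1) * (p * p) + (x0 * p + z0), 0))"
    by (rule phi_index[OF a b idx_lt[OF x0 z0]])
  also have "\<dots> = (\<Sum>b1<p. ?s * (Wop p x z $$ (b, b1) * Wop p x0 z0 $$ (a, b1)))"
    using a x0 z0 by (intro sum.cong refl) (simp add: Psi_index)
  also have "\<dots> = ?s * (\<Sum>b1<p. Wop p x z $$ (b, b1) * Wop p x0 z0 $$ (a, b1))"
    by (simp add: sum_distrib_left)
  also have "(\<Sum>b1<p. Wop p x z $$ (b, b1) * Wop p x0 z0 $$ (a, b1)) =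
      cnj (omega p ^ ((z + z0) * x)) * Wop p ((x0 + p - x) mod p) ((z + z0) mod p) $$ (a, b)"
    by (rule W_T[OF p1 a b x x0])
  finally show ?thesis .
qed

lemma sq_real: "0 \<le> t \<Longrightarrow> complex_of_real (sqrt t) * cnj (complex_of_real (sqrt t)) = complex_of_real t"
  by (simp flip: of_real_mult)

lemma omAB_entry:
  assumes P0: "\<forall>x<p. \<forall>z<p. 0 \<le> P x z"
    and a: "a < p" and b: "b < p" and a': "a' < p" and b': "b' < p"
  shows "ptrace_second (p * p) (p * p) (omega_ABE p P Pt) $$ (a * p + b, a' * p + b')
     = (\<Sum>x0<p. \<Sum>z0<p. \<Sum>x<p. \<Sum>z<p. complex_of_real (Pt ((p - x) mod p) z * P x0 z0 / real p) *
         (Wop p ((x0 + p - x) mod p) ((z + z0) mod p) $$ (a, b) * cnj (Wop p ((x0 + p - x) mod p) ((z + z0) mod p) $$ (a', b'))))"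
proof -
  have i: "a * p + b < p * p" and j: "a' * p + b' < p * p" using idx_lt a b a' b' by auto
  have "ptrace_second (p * p) (p * p) (omega_ABE p P Pt) $$ (a * p + b, a' * p + b')
      = (\<Sum>k<p * p. omega_ABE p P Pt $$ ((a * p + b) * (p * p) + k, (a' * p + b') * (p * p) + k))"
    using i j by (simp add: ptrace_second_def)
  also have "\<dots> = (\<Sum>x0<p. \<Sum>z0<p. omega_ABE p P Pt $$ ((a * p + b) * (p * p) + (x0 * p + z0), (a' * p + b') * (p * p) + (x0 * p + z0)))"
    by (rule sum_split)
  also have "\<dots> = (\<Sum>x0<p. \<Sum>z0<p. \<Sum>x<p. \<Sum>z<p. complex_of_real (Pt ((p - x) mod p) z * P x0 z0 / real p) *
         (Wop p ((x0 + p - x) mod p) ((z + z0) mod p) $$ (a, b) * cnj (Wop p ((x0 + p - x) mod p) ((z + z0) mod p) $$ (a', b'))))"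
  proof (intro sum.cong refl)
    fix x0 z0 x z assume x0: "x0 \<in> {..<p}" and z0: "z0 \<in> {..<p}" and x: "x \<in> {..<p}" and z: "z \<in> {..<p}"
    then have x0': "x0 < p" and z0': "z0 < p" and x': "x < p" and z': "z < p" by auto
    have r: "(a * p + b) * (p * p) + (x0 * p + z0) < p * p * (p * p)" using idx_lt[OF i idx_lt[OF x0' z0']] .
    have r': "(a' * p + b') * (p * p) + (x0 * p + z0) < p * p * (p * p)" using idx_lt[OF j idx_lt[OF x0' z0']] .
    show "omega_ABE p P Pt $$ ((a * p + b) * (p * p) + (x0 * p + z0), (a' * p + b') * (p * p) + (x0 * p + z0)) = 
      (\<Sum>x<p. \<Sum>z<p. complex_of_real (Pt ((p - x) mod p) z * P x0 z0 / real p) *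
         (Wop p ((x0 + p - x) mod p) ((z + z0) mod p) $$ (a, b) * cnj (Wop p ((x0 + p - x) mod p) ((z + z0) mod p) $$ (a', b'))))"
      unfolding omega_index[OF r r']
    proof (intro sum.cong refl)
      fix x z assume "x \<in> {..<p}" "z \<in> {..<p}"
      then have xx: "x < p" by auto
      let ?s = "complex_of_real (sqrt (P x0 z0)) * complex_of_real (1 / sqrt (real p))"
      let ?\<zeta> = "omega p ^ ((z + z0) * x)"
      let ?W = "Wop p ((x0 + p - x) mod p) ((z + z0) mod p) $$ (a, b)"
      let ?W' = "Wop p ((x0 + p - x) mod p) ((z + z0) mod p) $$ (a', b')"
      have ss: "?s * cnj ?s = complex_of_real (P x0 z0 / real p)"
      proof -
        have "?s * cnj ?s = (complex_of_real (sqrt (P x0 z0)) * cnj (complex_of_real (sqrt (P x0 z0)))) *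
               (complex_of_real (1 / sqrt (real p)) * cnj (complex_of_real (1 / sqrt (real p))))"
          by (simp only: complex_cnj_mult mult_ac)
        also have "\<dots> = complex_of_real (P x0 z0) * complex_of_real (1 / real p)"
        proof -
          have e1: "sqrt (P x0 z0) * sqrt (P x0 z0) = P x0 z0" using P0 x0' z0' by simp
          have e2: "(1 / sqrt (real p)) * (1 / sqrt (real p)) = 1 / real p" by simp
          show ?thesis by (simp only: complex_cnj_complex_of_real of_real_mult[symmetric] e1 e2)
        qed
        finally show ?thesis by simp
      qed
      have "complex_of_real (Pt ((p - x) mod p) z) *
         ((kron (kron (1\<^sub>m p) (Wop p x z)) (1\<^sub>m (p * p)) * Psi p P) $$ ((a * p + b) * (p * p) + (x0 * p + z0), 0) *
          cnj ((kron (kron (1\<^sub>m p) (Wop p x z)) (1\<^sub>m (p * p)) * Psi p P) $$ ((a' * p + b') * (p * p) + (x0 * p + z0), 0)))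
        = complex_of_real (Pt ((p - x) mod p) z) * ((?s * (cnj ?\<zeta> * ?W)) * cnj (?s * (cnj ?\<zeta> * ?W')))"
        by (simp only: phi_full[OF a b xx x0' z0'] phi_full[OF a' b' xx x0' z0'])
      also have "\<dots> = complex_of_real (Pt ((p - x) mod p) z) * (?s * cnj ?s) * (cnj ?\<zeta> * cnj (cnj ?\<zeta>)) * (?W * cnj ?W')"
        by (simp only: complex_cnj_mult mult_ac)
      also have "cnj ?\<zeta> * cnj (cnj ?\<zeta>) = 1" using om_norm[OF p1] by (simp only: complex_cnj_cnj)
      also note ss
      finally show "complex_of_real (Pt ((p - x) mod p) z) *
         ((kron (kron (1\<^sub>m p) (Wop p x z)) (1\<^sub>m (p * p)) * Psi p P) $$ ((a * p + b) * (p * p) + (x0 * p + z0), 0) *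
          cnj ((kron (kron (1\<^sub>m p) (Wop p x z)) (1\<^sub>m (p * p)) * Psi p P) $$ ((a' * p + b') * (p * p) + (x0 * p + z0), 0)))
        = complex_of_real (Pt ((p - x) mod p) z * P x0 z0 / real p) * (?W * cnj ?W')"
        by simp
    qed
  qed
  finally show ?thesis .
qed

lemma H1: "\<alpha> < p \<Longrightarrow> x < p \<Longrightarrow> ((\<alpha> + x) mod p + p - x) mod p = \<alpha>"
proof -
  assume a: "\<alpha> < p" and x: "x < p"
  have "((\<alpha> + x) mod p + p - x) mod p = ((\<alpha> + x) mod p + (p - x)) mod p" using x by simp
  also have "\<dots> = (\<alpha> + x + (p - x)) mod p" by (simp add: mod_add_left_eq)
  also have "\<alpha> + x + (p - x) = \<alpha> + p" using x by simp
  finally show ?thesis using a by simp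
qed

lemma H2: "\<beta> < p \<Longrightarrow> z < p \<Longrightarrow> (z + (\<beta> + (p - z)) mod p) mod p = \<beta>"
proof -
  assume b: "\<beta> < p" and z: "z < p"
  have "(z + (\<beta> + (p - z)) mod p) mod p = (z + (\<beta> + (p - z))) mod p" by (simp add: mod_add_right_eq)
  also have "z + (\<beta> + (p - z)) = \<beta> + p" using z by simp
  finally show ?thesis using b by simp
qed

lemma H2': "\<beta> < p \<Longrightarrow> z < p \<Longrightarrow> (z + (\<beta> + p - z) mod p) mod p = \<beta>"
  using H2[of \<beta> z] by simp

lemma H3: "\<alpha> < p \<Longrightarrow> x < p \<Longrightarrow> (\<alpha> + p - (p - x) mod p) mod p = (\<alpha> + x) mod p"
proof -
  assume a: "\<alpha> < p" and x: "x < p"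
  show ?thesis
  proof (cases "x = 0")
    case True then show ?thesis using a by simp
  next
    case False
    then have "(p - x) mod p = p - x" using x by simp
    then show ?thesis using x by simp
  qed
qed

lemma swap4: "(\<Sum>a\<in>A. \<Sum>b\<in>B. \<Sum>c\<in>C. \<Sum>d\<in>D. f a b c d) = (\<Sum>c\<in>C. \<Sum>d\<in>D. \<Sum>a\<in>A. \<Sum>b\<in>B. f a b c d)"
proof -
  have 1: "(\<Sum>c\<in>C. \<Sum>d\<in>D. f a b c d) = (\<Sum>(c, d)\<in>C \<times> D. f a b c d)" for a b
    by (rule sum.cartesian_product)
  have 2: "(\<Sum>a\<in>A. \<Sum>b\<in>B. f a b c d) = (\<Sum>(a, b)\<in>A \<times> B. f a b c d)" for c d
    by (rule sum.cartesian_product)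
  have "(\<Sum>a\<in>A. \<Sum>b\<in>B. \<Sum>c\<in>C. \<Sum>d\<in>D. f a b c d) = (\<Sum>a\<in>A. \<Sum>b\<in>B. \<Sum>(c, d)\<in>C \<times> D. f a b c d)"
    by (simp only: 1)
  also have "\<dots> = (\<Sum>(a, b)\<in>A \<times> B. \<Sum>(c, d)\<in>C \<times> D. f a b c d)"
    by (rule sum.cartesian_product)
  also have "\<dots> = (\<Sum>(c, d)\<in>C \<times> D. \<Sum>(a, b)\<in>A \<times> B. f a b c d)"
    by (simp only: split_def) (rule sum.swap)
  also have "\<dots> = (\<Sum>c\<in>C. \<Sum>d\<in>D. \<Sum>(a, b)\<in>A \<times> B. f a b c d)"
    by (rule sum.cartesian_product[symmetric])
  also have "\<dots> = (\<Sum>c\<in>C. \<Sum>d\<in>D. \<Sum>a\<in>A. \<Sum>b\<in>B. f a b c d)"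
    by (simp only: 2)
  finally show ?thesis .
qed

lemma conv_reindex:
  assumes "\<alpha> < p" "\<beta> < p"
  shows "(\<Sum>x<p. \<Sum>z<p. Pt ((p - x) mod p) z * P ((\<alpha> + x) mod p) ((\<beta> + (p - z)) mod p)) = conv p Pt P \<alpha> \<beta>"
proof -
  define g where "g u = (\<Sum>z<p. Pt u z * P ((\<alpha> + p - u) mod p) ((\<beta> + p - z) mod p))" for u
  have "(\<Sum>x<p. \<Sum>z<p. Pt ((p - x) mod p) z * P ((\<alpha> + x) mod p) ((\<beta> + (p - z)) mod p)) = (\<Sum>x<p. g ((p - x) mod p))"
    using assms by (intro sum.cong refl) (auto simp: g_def H3)
  also have "\<dots> = (\<Sum>u<p. g u)" by (rule sum_refl_mod) (use p1 in simp)
  finally show ?thesis by (simp add: g_def conv_def)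
qed


lemma decomp_idx: "i < p * p \<Longrightarrow> i = (i div p) * p + i mod p \<and> i div p < p \<and> i mod p < p"
  using p1 by (auto simp: less_mult_imp_div_less)

lemma omAB_orthmat:
  assumes P0: "\<forall>x<p. \<forall>z<p. 0 \<le> P x z"
  shows "ptrace_second (p * p) (p * p) (omega_ABE p P Pt)
       = orthmat (p * p) ({..<p} \<times> {..<p}) (\<lambda>(\<alpha>, \<beta>). complex_of_real (conv p Pt P \<alpha> \<beta>)) (bellv p)"
proof (rule eq_matI)
  fix i j assume "i < dim_row (orthmat (p * p) ({..<p} \<times> {..<p}) (\<lambda>(\<alpha>, \<beta>). complex_of_real (conv p Pt P \<alpha> \<beta>)) (bellv p))"
    "j < dim_col (orthmat (p * p) ({..<p} \<times> {..<p}) (\<lambda>(\<alpha>, \<beta>). complex_of_real (conv p Pt P \<alpha> \<beta>)) (bellv p))"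
  then have i: "i < p * p" and j: "j < p * p" by auto
  define a b a' b' where "a = i div p" "b = i mod p" "a' = j div p" "b' = j mod p"
  have ia: "i = a * p + b" "a < p" "b < p" using decomp_idx[OF i] by (auto simp: a_b_a'_b'_def)
  have ja: "j = a' * p + b'" "a' < p" "b' < p" using decomp_idx[OF j] by (auto simp: a_b_a'_b'_def)
  define F where "F \<alpha> \<beta> = Wop p \<alpha> \<beta> $$ (a, b) * cnj (Wop p \<alpha> \<beta> $$ (a', b'))" for \<alpha> \<beta>
  have "ptrace_second (p * p) (p * p) (omega_ABE p P Pt) $$ (i, j)
      = (\<Sum>x0<p. \<Sum>z0<p. \<Sum>x<p. \<Sum>z<p. complex_of_real (Pt ((p - x) mod p) z * P x0 z0 / real p) *
         F ((x0 + p - x) mod p) ((z + z0) mod p))"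
    unfolding ia ja F_def by (rule omAB_entry[OF P0 ia(2,3) ja(2,3)])
  also have "\<dots> = (\<Sum>x<p. \<Sum>z<p. \<Sum>x0<p. \<Sum>z0<p. complex_of_real (Pt ((p - x) mod p) z * P x0 z0 / real p) *
         F ((x0 + p - x) mod p) ((z + z0) mod p))"
    by (rule swap4)
  also have "\<dots> = (\<Sum>x<p. \<Sum>z<p. \<Sum>\<alpha><p. \<Sum>\<beta><p. complex_of_real (Pt ((p - x) mod p) z * P ((\<alpha> + x) mod p) ((\<beta> + (p - z)) mod p) / real p) *
         F \<alpha> \<beta>)"
  proof (rule sum.cong[OF refl], rule sum.cong[OF refl])
    fix x z assume "x \<in> {..<p}" "z \<in> {..<p}"
    then have x: "x < p" and z: "z < p" by auto
    have "(\<Sum>x0<p. \<Sum>z0<p. complex_of_real (Pt ((p - x) mod p) z * P x0 z0 / real p) * F ((x0 + p - x) mod p) ((z + z0) mod p))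
        = (\<Sum>\<alpha><p. \<Sum>z0<p. complex_of_real (Pt ((p - x) mod p) z * P ((\<alpha> + x) mod p) z0 / real p) * F (((\<alpha> + x) mod p + p - x) mod p) ((z + z0) mod p))"
      by (rule sum_shift_mod[symmetric]) (use p1 in simp)
    also have "\<dots> = (\<Sum>\<alpha><p. \<Sum>\<beta><p. complex_of_real (Pt ((p - x) mod p) z * P ((\<alpha> + x) mod p) ((\<beta> + (p - z)) mod p) / real p) * F (((\<alpha> + x) mod p + p - x) mod p) ((z + (\<beta> + (p - z)) mod p) mod p))"
      by (rule sum.cong[OF refl], rule sum_shift_mod[where c="p - z", symmetric]) (use p1 in simp)
    also have "\<dots> = (\<Sum>\<alpha><p. \<Sum>\<beta><p. complex_of_real (Pt ((p - x) mod p) z * P ((\<alpha> + x) mod p) ((\<beta> + (p - z)) mod p) / real p) * F \<alpha> \<beta>)"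
      using x z by (intro sum.cong refl) (simp add: H1 H2 H2')
    finally show "(\<Sum>x0<p. \<Sum>z0<p. complex_of_real (Pt ((p - x) mod p) z * P x0 z0 / real p) * F ((x0 + p - x) mod p) ((z + z0) mod p))
        = (\<Sum>\<alpha><p. \<Sum>\<beta><p. complex_of_real (Pt ((p - x) mod p) z * P ((\<alpha> + x) mod p) ((\<beta> + (p - z)) mod p) / real p) * F \<alpha> \<beta>)" .
  qed
  also have "\<dots> = (\<Sum>\<alpha><p. \<Sum>\<beta><p. \<Sum>x<p. \<Sum>z<p. complex_of_real (Pt ((p - x) mod p) z * P ((\<alpha> + x) mod p) ((\<beta> + (p - z)) mod p) / real p) *
         F \<alpha> \<beta>)"
    by (rule swap4)
  also have "\<dots> = (\<Sum>\<alpha><p. \<Sum>\<beta><p. complex_of_real (conv p Pt P \<alpha> \<beta> / real p) * F \<alpha> \<beta>)"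
  proof (intro sum.cong refl)
    fix \<alpha> \<beta> assume "\<alpha> \<in> {..<p}" "\<beta> \<in> {..<p}"
    then have ab: "\<alpha> < p" "\<beta> < p" by auto
    have "(\<Sum>x<p. \<Sum>z<p. complex_of_real (Pt ((p - x) mod p) z * P ((\<alpha> + x) mod p) ((\<beta> + (p - z)) mod p) / real p) * F \<alpha> \<beta>)
        = complex_of_real ((\<Sum>x<p. \<Sum>z<p. Pt ((p - x) mod p) z * P ((\<alpha> + x) mod p) ((\<beta> + (p - z)) mod p)) / real p) * F \<alpha> \<beta>"
      by (simp add: sum_distrib_right sum_divide_distrib)
    then show "(\<Sum>x<p. \<Sum>z<p. complex_of_real (Pt ((p - x) mod p) z * P ((\<alpha> + x) mod p) ((\<beta> + (p - z)) mod p) / real p) * F \<alpha> \<beta>)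
        = complex_of_real (conv p Pt P \<alpha> \<beta> / real p) * F \<alpha> \<beta>"
      by (simp only: conv_reindex[OF ab])
  qed
  also have "\<dots> = orthmat (p * p) ({..<p} \<times> {..<p}) (\<lambda>(\<alpha>, \<beta>). complex_of_real (conv p Pt P \<alpha> \<beta>)) (bellv p) $$ (i, j)"
  proof -
    have "orthmat (p * p) ({..<p} \<times> {..<p}) (\<lambda>(\<alpha>, \<beta>). complex_of_real (conv p Pt P \<alpha> \<beta>)) (bellv p) $$ (i, j)
        = (\<Sum>(\<alpha>, \<beta>)\<in>{..<p} \<times> {..<p}. complex_of_real (conv p Pt P \<alpha> \<beta>) * bellv p (\<alpha>, \<beta>) i * cnj (bellv p (\<alpha>, \<beta>) j))"
      using i j by (simp add: orthmat_index case_prod_beta)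
    also have "\<dots> = (\<Sum>\<alpha><p. \<Sum>\<beta><p. complex_of_real (conv p Pt P \<alpha> \<beta>) * bellv p (\<alpha>, \<beta>) i * cnj (bellv p (\<alpha>, \<beta>) j))"
      by (simp add: sum.cartesian_product)
    also have "\<dots> = (\<Sum>\<alpha><p. \<Sum>\<beta><p. complex_of_real (conv p Pt P \<alpha> \<beta> / real p) * F \<alpha> \<beta>)"
    proof (intro sum.cong refl)
      fix \<alpha> \<beta>
      have c2: "complex_of_real (1 / sqrt (real p)) * cnj (complex_of_real (1 / sqrt (real p))) = complex_of_real (1 / real p)"
        by (simp flip: of_real_mult)
      have "complex_of_real (conv p Pt P \<alpha> \<beta>) * bellv p (\<alpha>, \<beta>) i * cnj (bellv p (\<alpha>, \<beta>) j)
          = complex_of_real (conv p Pt P \<alpha> \<beta>) * (complex_of_real (1 / sqrt (real p)) * cnj (complex_of_real (1 / sqrt (real p)))) * F \<alpha> \<beta>"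
        unfolding bellv_def F_def a_b_a'_b'_def by (simp only: case_prod_conv complex_cnj_mult mult_ac)
      also have "\<dots> = complex_of_real (conv p Pt P \<alpha> \<beta> / real p) * F \<alpha> \<beta>" by (simp only: c2) simp
      finally show "complex_of_real (conv p Pt P \<alpha> \<beta>) * bellv p (\<alpha>, \<beta>) i * cnj (bellv p (\<alpha>, \<beta>) j) = complex_of_real (conv p Pt P \<alpha> \<beta> / real p) * F \<alpha> \<beta>" .
    qed
    finally show ?thesis by simp
  qed
  finally show "ptrace_second (p * p) (p * p) (omega_ABE p P Pt) $$ (i, j) = orthmat (p * p) ({..<p} \<times> {..<p}) (\<lambda>(\<alpha>, \<beta>). complex_of_real (conv p Pt P \<alpha> \<beta>)) (bellv p) $$ (i, j)" .
qed (auto simp: ptrace_second_def)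

end




definition estd :: "nat \<Rightarrow> nat \<Rightarrow> complex" where
  "estd k i = (if i = k then 1 else 0)"

lemma estd_orth: "orthonormal n {..<n} estd"
  unfolding orthonormal_def
proof (intro ballI)
  fix k k' assume k: "k \<in> {..<n}" and k': "k' \<in> {..<n}"
  have "(\<Sum>i<n. cnj (estd k i) * estd k' i) = (\<Sum>i<n. if i = k then (if k = k' then 1 else 0) else 0)"
    by (intro sum.cong refl) (simp add: estd_def)
  also have "\<dots> = (if k = k' then 1 else 0)" using k by (simp add: sum.delta)
  finally show "(\<Sum>i<n. cnj (estd k i) * estd k' i) = (if k = k' then 1 else 0)" .
qed

definition aev :: "nat \<Rightarrow> (nat \<Rightarrow> nat \<Rightarrow> real) \<Rightarrow> nat \<Rightarrow> nat \<Rightarrow> complex" where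
  "aev q P k i = complex_of_real (sqrt (P (i mod (q * q) div q) (i mod q))) * Wop q (i mod (q * q) div q) (i mod q) $$ (i div (q * q), k)"

lemma dm_pp_div: "e < m \<Longrightarrow> (a * m + e) div m = (a::nat)"
  by (metis add_cancel_left_right div_less div_mult_self3 mult.commute not_less_zero zero_less_iff_neq_zero neq0_conv)

lemma dm_pp_mod: "(a * (p * p) + e) mod p = e mod (p::nat)"
  by (metis mod_mult_self3 mult.assoc)

lemma orthmat_estd_index: "i < n \<Longrightarrow> j < n \<Longrightarrow> orthmat n {..<n} a estd $$ (i, j) = (if i = j then a i else 0)"
  by (auto simp: orthmat_index estd_def ifz_l ifz_r sum.delta if_distrib[where f=cnj] cong: if_cong)

lemma swap3: "(\<Sum>k\<in>A. \<Sum>a\<in>B. \<Sum>b\<in>C. f k a b) = (\<Sum>a\<in>B. \<Sum>b\<in>C. \<Sum>k\<in>A. f k a b)"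
  by (subst sum.swap) (rule sum.cong[OF refl], rule sum.swap)

context
  fixes p :: nat
  assumes p1: "1 < p"
begin

private lemma p0_c: "0 < p" using p1 by simp

lemmas Wd2[simp] = Wop_dims[OF p1] Wop_carrier[OF p1]

lemma bell_orth: "orthonormal (p * p) ({..<p} \<times> {..<p}) (bellv p)"
  unfolding orthonormal_def
proof (intro ballI)
  fix k k' assume k: "k \<in> {..<p} \<times> {..<p}" and k': "k' \<in> {..<p} \<times> {..<p}"
  obtain \<alpha> \<beta> where kk: "k = (\<alpha>, \<beta>)" by (cases k)
  obtain \<alpha>' \<beta>' where kk': "k' = (\<alpha>', \<beta>')" by (cases k')
  have a: "\<alpha> \<in> {..<p}" "\<beta> \<in> {..<p}" "\<alpha>' \<in> {..<p}" "\<beta>' \<in> {..<p}" using k k' kk kk' by auto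
  have c2: "cnj (complex_of_real (1 / sqrt (real p))) * complex_of_real (1 / sqrt (real p)) = complex_of_real (1 / real p)"
    by (simp flip: of_real_mult)
  have "(\<Sum>i<p * p. cnj (bellv p (\<alpha>, \<beta>) i) * bellv p (\<alpha>', \<beta>') i)
      = (\<Sum>u<p. \<Sum>v<p. cnj (bellv p (\<alpha>, \<beta>) (u * p + v)) * bellv p (\<alpha>', \<beta>') (u * p + v))"
    by (rule sum_split)
  also have "\<dots> = (\<Sum>u<p. \<Sum>v<p. complex_of_real (1 / real p) * (Wop p \<alpha>' \<beta>' $$ (u, v) * cnj (Wop p \<alpha> \<beta> $$ (u, v))))"
  proof (intro sum.cong refl)
    fix u v assume "u \<in> {..<p}" "v \<in> {..<p}"
    then have v: "v < p" by auto
    have dm: "(u * p + v) div p = u" "(u * p + v) mod p = v" using v by auto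
    show "cnj (bellv p (\<alpha>, \<beta>) (u * p + v)) * bellv p (\<alpha>', \<beta>') (u * p + v) =
        complex_of_real (1 / real p) * (Wop p \<alpha>' \<beta>' $$ (u, v) * cnj (Wop p \<alpha> \<beta> $$ (u, v)))"
      unfolding bellv_def case_prod_conv dm c2[symmetric] by (simp only: complex_cnj_mult mult_ac)
  qed
  also have "\<dots> = complex_of_real (1 / real p) * (\<Sum>u<p. \<Sum>v<p. Wop p \<alpha>' \<beta>' $$ (u, v) * cnj (Wop p \<alpha> \<beta> $$ (u, v)))"
    by (simp add: sum_distrib_left)
  also have "\<dots> = complex_of_real (1 / real p) * (if \<alpha>' = \<alpha> \<and> \<beta>' = \<beta> then of_nat p else 0)"
    using a by (subst W_hs_orth[OF p1]) auto
  also have "\<dots> = (if (\<alpha>, \<beta>) = (\<alpha>', \<beta>') then 1 else 0)" using p0_c by auto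
  finally show "(\<Sum>i<p * p. cnj (bellv p k i) * bellv p k' i) = (if k = k' then 1 else 0)" unfolding kk kk' .
qed

lemma conv_sum:
  assumes P: "prob_dist p P" and Pt: "prob_dist p Pt"
  shows "(\<Sum>\<alpha><p. \<Sum>\<beta><p. conv p Pt P \<alpha> \<beta>) = 1"
proof -
  have "(\<Sum>\<alpha><p. \<Sum>\<beta><p. conv p Pt P \<alpha> \<beta>)
      = (\<Sum>\<alpha><p. \<Sum>\<beta><p. \<Sum>x<p. \<Sum>z<p. Pt x z * P ((\<alpha> + p - x) mod p) ((\<beta> + p - z) mod p))"
    by (simp add: conv_def)
  also have "\<dots> = (\<Sum>x<p. \<Sum>z<p. \<Sum>\<alpha><p. \<Sum>\<beta><p. Pt x z * P ((\<alpha> + p - x) mod p) ((\<beta> + p - z) mod p))"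
    by (rule swap4[OF p1])
  also have "\<dots> = (\<Sum>x<p. \<Sum>z<p. Pt x z * (\<Sum>\<alpha><p. \<Sum>\<beta><p. P \<alpha> \<beta>))"
  proof (rule sum.cong[OF refl], rule sum.cong[OF refl])
    fix x z assume "x \<in> {..<p}" "z \<in> {..<p}"
    then have x: "x < p" and z: "z < p" by auto
    have "(\<Sum>\<alpha><p. \<Sum>\<beta><p. Pt x z * P ((\<alpha> + p - x) mod p) ((\<beta> + p - z) mod p))
        = Pt x z * (\<Sum>\<alpha><p. \<Sum>\<beta><p. P ((\<alpha> + (p - x)) mod p) ((\<beta> + (p - z)) mod p))"
      using x z by (simp add: sum_distrib_left)
    also have "(\<Sum>\<alpha><p. \<Sum>\<beta><p. P ((\<alpha> + (p - x)) mod p) ((\<beta> + (p - z)) mod p)) = (\<Sum>\<alpha><p. \<Sum>\<beta><p. P ((\<alpha> + (p - x)) mod p) \<beta>)"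
      by (rule sum.cong[OF refl], rule sum_shift_mod) (use p0_c in simp)
    also have "\<dots> = (\<Sum>\<alpha><p. \<Sum>\<beta><p. P \<alpha> \<beta>)"
      by (rule sum_shift_mod[where g="\<lambda>\<alpha>. \<Sum>\<beta><p. P \<alpha> \<beta>"]) (use p0_c in simp)
    finally show "(\<Sum>\<alpha><p. \<Sum>\<beta><p. Pt x z * P ((\<alpha> + p - x) mod p) ((\<beta> + p - z) mod p)) = Pt x z * (\<Sum>\<alpha><p. \<Sum>\<beta><p. P \<alpha> \<beta>)" .
  qed
  also have "\<dots> = 1" using P Pt by (simp add: prob_dist_def sum_distrib_right[symmetric])
  finally show ?thesis .
qed

lemma omB_orthmat:
  assumes P: "prob_dist p P" and Pt: "prob_dist p Pt"
  shows "ptrace_first p p (orthmat (p * p) ({..<p} \<times> {..<p}) (\<lambda>(\<alpha>, \<beta>). complex_of_real (conv p Pt P \<alpha> \<beta>)) (bellv p))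
       = orthmat p {..<p} (\<lambda>_. complex_of_real (1 / real p)) estd"
proof (rule eq_matI)
  fix j j' assume "j < dim_row (orthmat p {..<p} (\<lambda>_. complex_of_real (1 / real p)) estd)"
    "j' < dim_col (orthmat p {..<p} (\<lambda>_. complex_of_real (1 / real p)) estd)"
  then have j: "j < p" and j': "j' < p" by auto
  let ?c = "complex_of_real (1 / sqrt (real p))"
  have c2: "?c * cnj ?c = complex_of_real (1 / real p)" by (simp flip: of_real_mult)
  have "ptrace_first p p (orthmat (p * p) ({..<p} \<times> {..<p}) (\<lambda>(\<alpha>, \<beta>). complex_of_real (conv p Pt P \<alpha> \<beta>)) (bellv p)) $$ (j, j')
      = (\<Sum>k<p. \<Sum>(\<alpha>, \<beta>)\<in>{..<p} \<times> {..<p}. complex_of_real (conv p Pt P \<alpha> \<beta>) * bellv p (\<alpha>, \<beta>) (k * p + j) * cnj (bellv p (\<alpha>, \<beta>) (k * p + j')))"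
    using j j' by (simp add: ptrace_first_def orthmat_index idx_lt case_prod_beta)
  also have "\<dots> = (\<Sum>k<p. \<Sum>\<alpha><p. \<Sum>\<beta><p. (complex_of_real (conv p Pt P \<alpha> \<beta>) * complex_of_real (1 / real p)) * (Wop p \<alpha> \<beta> $$ (k, j) * cnj (Wop p \<alpha> \<beta> $$ (k, j'))))"
  proof (rule sum.cong[OF refl])
    fix k assume "k \<in> {..<p}"
    have dm: "(k * p + j) div p = k" "(k * p + j) mod p = j" "(k * p + j') div p = k" "(k * p + j') mod p = j'" using j j' by auto
    show "(\<Sum>(\<alpha>, \<beta>)\<in>{..<p} \<times> {..<p}. complex_of_real (conv p Pt P \<alpha> \<beta>) * bellv p (\<alpha>, \<beta>) (k * p + j) * cnj (bellv p (\<alpha>, \<beta>) (k * p + j')))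
        = (\<Sum>\<alpha><p. \<Sum>\<beta><p. (complex_of_real (conv p Pt P \<alpha> \<beta>) * complex_of_real (1 / real p)) * (Wop p \<alpha> \<beta> $$ (k, j) * cnj (Wop p \<alpha> \<beta> $$ (k, j'))))"
      unfolding sum.cartesian_product[symmetric] bellv_def case_prod_conv dm c2[symmetric]
      by (simp only: complex_cnj_mult mult_ac)
  qed
  also have "\<dots> = (\<Sum>\<alpha><p. \<Sum>\<beta><p. (complex_of_real (conv p Pt P \<alpha> \<beta>) * complex_of_real (1 / real p)) * (\<Sum>k<p. Wop p \<alpha> \<beta> $$ (k, j) * cnj (Wop p \<alpha> \<beta> $$ (k, j'))))"
    by (rule trans[OF swap3]) (simp only: sum_distrib_left)
  also have "\<dots> = (\<Sum>\<alpha><p. \<Sum>\<beta><p. (complex_of_real (conv p Pt P \<alpha> \<beta>) * complex_of_real (1 / real p)) * (if j = j' then 1 else 0))"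
    using j j' by (intro sum.cong refl) (simp add: W_col_orth[OF p1])
  also have "\<dots> = complex_of_real ((\<Sum>\<alpha><p. \<Sum>\<beta><p. conv p Pt P \<alpha> \<beta>) * (1 / real p)) * (if j = j' then 1 else 0)"
    by (simp add: sum_distrib_right sum_divide_distrib)
  also have "\<dots> = (if j = j' then complex_of_real (1 / real p) else 0)" using conv_sum[OF P Pt] by simp
  also have "\<dots> = orthmat p {..<p} (\<lambda>_. complex_of_real (1 / real p)) estd $$ (j, j')"
    using j j' by (simp add: orthmat_estd_index)
  finally show "ptrace_first p p (orthmat (p * p) ({..<p} \<times> {..<p}) (\<lambda>(\<alpha>, \<beta>). complex_of_real (conv p Pt P \<alpha> \<beta>)) (bellv p)) $$ (j, j')
      = orthmat p {..<p} (\<lambda>_. complex_of_real (1 / real p)) estd $$ (j, j')" .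
qed (auto simp: ptrace_first_def)

lemma W_sandwich:
  assumes x: "x < p"
  shows "(\<Sum>k<p. (\<Sum>b1<p. Wop p x z $$ (k, b1) * f b1) * cnj (\<Sum>b2<p. Wop p x z $$ (k, b2) * g b2))
       = (\<Sum>b<p. f b * cnj (g b))"
proof -
  have "(\<Sum>k<p. (\<Sum>b1<p. Wop p x z $$ (k, b1) * f b1) * cnj (\<Sum>b2<p. Wop p x z $$ (k, b2) * g b2))
      = (\<Sum>k<p. \<Sum>b1<p. \<Sum>b2<p. (f b1 * cnj (g b2)) * (Wop p x z $$ (k, b1) * cnj (Wop p x z $$ (k, b2))))"
    by (simp add: sum_product cnj_sum mult_ac)
  also have "\<dots> = (\<Sum>b1<p. \<Sum>b2<p. \<Sum>k<p. (f b1 * cnj (g b2)) * (Wop p x z $$ (k, b1) * cnj (Wop p x z $$ (k, b2))))"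
    by (rule swap3)
  also have "\<dots> = (\<Sum>b1<p. \<Sum>b2<p. (f b1 * cnj (g b2)) * (if b1 = b2 then 1 else 0))"
    using x by (intro sum.cong refl) (simp add: sum_distrib_left[symmetric] W_col_orth[OF p1])
  also have "\<dots> = (\<Sum>b<p. f b * cnj (g b))"
    by (intro sum.cong refl) (simp add: delta_sum_r')
  finally show ?thesis .
qed

lemma Pt_refl_sum:
  assumes Pt: "prob_dist p Pt"
  shows "(\<Sum>x<p. \<Sum>z<p. Pt ((p - x) mod p) z) = 1"
proof -
  have "(\<Sum>x<p. \<Sum>z<p. Pt ((p - x) mod p) z) = (\<Sum>x<p. \<Sum>z<p. Pt x z)"
    by (rule sum_refl_mod[where g="\<lambda>u. \<Sum>z<p. Pt u z"]) (use p0_c in simp)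
  then show ?thesis using Pt by (simp add: prob_dist_def)
qed

lemma omAE_orthmat:
  assumes P0: "\<forall>x<p. \<forall>z<p. 0 \<le> P x z" and Pt: "prob_dist p Pt"
  shows "ptrace_mid p p (p * p) (omega_ABE p P Pt) = orthmat (p * (p * p)) {..<p} (\<lambda>_. complex_of_real (1 / real p)) (aev p P)"
proof (rule eq_matI)
  fix i j assume "i < dim_row (orthmat (p * (p * p)) {..<p} (\<lambda>_. complex_of_real (1 / real p)) (aev p P))"
    "j < dim_col (orthmat (p * (p * p)) {..<p} (\<lambda>_. complex_of_real (1 / real p)) (aev p P))"
  then have i: "i < p * (p * p)" and j: "j < p * (p * p)" by auto
  define a e a' e' where "a = i div (p * p)" "e = i mod (p * p)" "a' = j div (p * p)" "e' = j mod (p * p)"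
  have ae: "a < p" "e < p * p" "a' < p" "e' < p * p" using i j p0_c
    by (auto simp: a_e_a'_e'_def less_mult_imp_div_less mult.commute)
  define x0 z0 x0' z0' where "x0 = e div p" "z0 = e mod p" "x0' = e' div p" "z0' = e' mod p"
  have xz: "e = x0 * p + z0" "x0 < p" "z0 < p" "e' = x0' * p + z0'" "x0' < p" "z0' < p"
    using decomp_idx[OF p1 ae(2)] decomp_idx[OF p1 ae(4)] by (auto simp: x0_z0_x0'_z0'_def)
  let ?c = "complex_of_real (1 / sqrt (real p))"
  have c2: "?c * cnj ?c = complex_of_real (1 / real p)" by (simp flip: of_real_mult)
  define \<Psi>1 where "\<Psi>1 b1 = Psi p P $$ ((a * p + b1) * (p * p) + e, 0)" for b1
  define \<Psi>2 where "\<Psi>2 b1 = Psi p P $$ ((a' * p + b1) * (p * p) + e', 0)" for b1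
  have idx: "(i div (p * p)) * (p * (p * p)) + k * (p * p) + i mod (p * p) = (a * p + k) * (p * p) + e"
    "(j div (p * p)) * (p * (p * p)) + k * (p * p) + j mod (p * p) = (a' * p + k) * (p * p) + e'" for k
    by (simp_all add: a_e_a'_e'_def algebra_simps)
  have "ptrace_mid p p (p * p) (omega_ABE p P Pt) $$ (i, j)
      = (\<Sum>k<p. omega_ABE p P Pt $$ ((a * p + k) * (p * p) + e, (a' * p + k) * (p * p) + e'))"
    using i j by (simp add: ptrace_mid_def idx)
  also have "\<dots> = (\<Sum>k<p. \<Sum>x<p. \<Sum>z<p. complex_of_real (Pt ((p - x) mod p) z) *
       ((\<Sum>b1<p. Wop p x z $$ (k, b1) * \<Psi>1 b1) * cnj (\<Sum>b2<p. Wop p x z $$ (k, b2) * \<Psi>2 b2)))"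
  proof (rule sum.cong[OF refl])
    fix k assume "k \<in> {..<p}"
    then have k: "k < p" by simp
    have r: "(a * p + k) * (p * p) + e < p * p * (p * p)" using idx_lt[OF idx_lt[OF ae(1) k] ae(2)] .
    have r': "(a' * p + k) * (p * p) + e' < p * p * (p * p)" using idx_lt[OF idx_lt[OF ae(3) k] ae(4)] .
    show "omega_ABE p P Pt $$ ((a * p + k) * (p * p) + e, (a' * p + k) * (p * p) + e') = (\<Sum>x<p. \<Sum>z<p. complex_of_real (Pt ((p - x) mod p) z) *
       ((\<Sum>b1<p. Wop p x z $$ (k, b1) * \<Psi>1 b1) * cnj (\<Sum>b2<p. Wop p x z $$ (k, b2) * \<Psi>2 b2)))"
      unfolding omega_index[OF p1 r r'] \<Psi>1_def \<Psi>2_def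
      by (simp only: phi_index[OF p1 ae(1) k ae(2)] phi_index[OF p1 ae(3) k ae(4)])
  qed
  also have "\<dots> = (\<Sum>x<p. \<Sum>z<p. complex_of_real (Pt ((p - x) mod p) z) *
       (\<Sum>k<p. (\<Sum>b1<p. Wop p x z $$ (k, b1) * \<Psi>1 b1) * cnj (\<Sum>b2<p. Wop p x z $$ (k, b2) * \<Psi>2 b2)))"
    by (rule trans[OF swap3]) (simp only: sum_distrib_left)
  also have "\<dots> = (\<Sum>x<p. \<Sum>z<p. complex_of_real (Pt ((p - x) mod p) z) * (\<Sum>b<p. \<Psi>1 b * cnj (\<Psi>2 b)))"
  proof (rule sum.cong[OF refl], rule sum.cong[OF refl])
    fix x z assume "x \<in> {..<p}"
    then have x: "x < p" by simp
    show "complex_of_real (Pt ((p - x) mod p) z) *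
       (\<Sum>k<p. (\<Sum>b1<p. Wop p x z $$ (k, b1) * \<Psi>1 b1) * cnj (\<Sum>b2<p. Wop p x z $$ (k, b2) * \<Psi>2 b2))
      = complex_of_real (Pt ((p - x) mod p) z) * (\<Sum>b<p. \<Psi>1 b * cnj (\<Psi>2 b))"
      by (simp only: W_sandwich[OF x])
  qed
  also have "\<dots> = complex_of_real (\<Sum>x<p. \<Sum>z<p. Pt ((p - x) mod p) z) * (\<Sum>b<p. \<Psi>1 b * cnj (\<Psi>2 b))"
    by (simp add: sum_distrib_right)
  also have "\<dots> = (\<Sum>b<p. \<Psi>1 b * cnj (\<Psi>2 b))" using Pt_refl_sum[OF Pt] by simp
  also have "\<dots> = (\<Sum>k<p. complex_of_real (1 / real p) * aev p P k i * cnj (aev p P k j))"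
  proof (rule sum.cong[OF refl])
    fix k assume "k \<in> {..<p}"
    then have k: "k < p" by simp
    have ai: "i div (p * p) = a" "i mod (p * p) div p = x0" "i mod p = z0"
      "j div (p * p) = a'" "j mod (p * p) div p = x0'" "j mod p = z0'"
      using xz by (simp_all add: a_e_a'_e'_def x0_z0_x0'_z0'_def mod_mult2_eq' mod_mod_cancel)
    show "\<Psi>1 k * cnj (\<Psi>2 k) = complex_of_real (1 / real p) * aev p P k i * cnj (aev p P k j)"
      unfolding \<Psi>1_def \<Psi>2_def aev_def ai xz(1,4) Psi_index[OF p1 ae(1) k xz(2,3)] Psi_index[OF p1 ae(3) k xz(5,6)]
        c2[symmetric]
      by (simp only: complex_cnj_mult mult_ac)
  qed
  also have "\<dots> = orthmat (p * (p * p)) {..<p} (\<lambda>_. complex_of_real (1 / real p)) (aev p P) $$ (i, j)"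
    using i j by (simp add: orthmat_index)
  finally show "ptrace_mid p p (p * p) (omega_ABE p P Pt) $$ (i, j) = orthmat (p * (p * p)) {..<p} (\<lambda>_. complex_of_real (1 / real p)) (aev p P) $$ (i, j)" .
qed (auto simp: ptrace_mid_def)

lemma aev_orth:
  assumes P: "prob_dist p P"
  shows "orthonormal (p * (p * p)) {..<p} (aev p P)"
  unfolding orthonormal_def
proof (intro ballI)
  fix k k' assume "k \<in> {..<p}" "k' \<in> {..<p}"
  then have k: "k < p" and k': "k' < p" by auto
  have P0: "\<forall>x<p. \<forall>z<p. 0 \<le> P x z" using P by (simp add: prob_dist_def)
  have "(\<Sum>i<p * (p * p). cnj (aev p P k i) * aev p P k' i)
      = (\<Sum>a<p. \<Sum>e<p * p. cnj (aev p P k (a * (p * p) + e)) * aev p P k' (a * (p * p) + e))"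
    by (rule sum_split)
  also have "\<dots> = (\<Sum>a<p. \<Sum>x0<p. \<Sum>z0<p. cnj (aev p P k (a * (p * p) + (x0 * p + z0))) * aev p P k' (a * (p * p) + (x0 * p + z0)))"
    by (rule sum.cong[OF refl], rule sum_split)
  also have "\<dots> = (\<Sum>a<p. \<Sum>x0<p. \<Sum>z0<p. complex_of_real (P x0 z0) * (Wop p x0 z0 $$ (a, k') * cnj (Wop p x0 z0 $$ (a, k))))"
  proof (intro sum.cong refl)
    fix a x0 z0 assume "a \<in> {..<p}" "x0 \<in> {..<p}" "z0 \<in> {..<p}"
    then have a: "a < p" and x0: "x0 < p" and z0: "z0 < p" by auto
    have e: "x0 * p + z0 < p * p" using idx_lt[OF x0 z0] .
    have ai: "(a * (p * p) + (x0 * p + z0)) div (p * p) = a" "(a * (p * p) + (x0 * p + z0)) mod (p * p) div p = x0"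
      "(a * (p * p) + (x0 * p + z0)) mod p = z0"
      using e x0 z0 by (simp_all add: mod_mult2_eq' mod_mod_cancel dm_pp_div dm_pp_mod)
    have sq: "cnj (complex_of_real (sqrt (P x0 z0))) * complex_of_real (sqrt (P x0 z0)) = complex_of_real (P x0 z0)"
      using P0 x0 z0 by (simp flip: of_real_mult)
    show "cnj (aev p P k (a * (p * p) + (x0 * p + z0))) * aev p P k' (a * (p * p) + (x0 * p + z0))
        = complex_of_real (P x0 z0) * (Wop p x0 z0 $$ (a, k') * cnj (Wop p x0 z0 $$ (a, k)))"
      unfolding aev_def ai sq[symmetric] by (simp only: complex_cnj_mult mult_ac)
  qed
  also have "\<dots> = (\<Sum>x0<p. \<Sum>z0<p. \<Sum>a<p. complex_of_real (P x0 z0) * (Wop p x0 z0 $$ (a, k') * cnj (Wop p x0 z0 $$ (a, k))))"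
    by (rule swap3)
  also have "\<dots> = (\<Sum>x0<p. \<Sum>z0<p. complex_of_real (P x0 z0) * (if k' = k then 1 else 0))"
    using k k' by (intro sum.cong refl) (simp add: sum_distrib_left[symmetric] W_col_orth[OF p1])
  also have "\<dots> = complex_of_real (\<Sum>x0<p. \<Sum>z0<p. P x0 z0) * (if k = k' then 1 else 0)"
    by (simp add: sum_distrib_right)
  also have "\<dots> = (if k = k' then 1 else 0)" using P by (simp add: prob_dist_def)
  finally show "(\<Sum>i<p * (p * p). cnj (aev p P k i) * aev p P k' i) = (if k = k' then 1 else 0)" .
qed

lemma omE_orthmat:
  assumes P0: "\<forall>x<p. \<forall>z<p. 0 \<le> P x z"
  shows "ptrace_first p (p * p) (orthmat (p * (p * p)) {..<p} (\<lambda>_. complex_of_real (1 / real p)) (aev p P))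
       = orthmat (p * p) {..<p * p} (\<lambda>e. complex_of_real (P (e div p) (e mod p))) estd"
proof (rule eq_matI)
  fix e e' assume "e < dim_row (orthmat (p * p) {..<p * p} (\<lambda>e. complex_of_real (P (e div p) (e mod p))) estd)"
    "e' < dim_col (orthmat (p * p) {..<p * p} (\<lambda>e. complex_of_real (P (e div p) (e mod p))) estd)"
  then have e: "e < p * p" and e': "e' < p * p" by auto
  define x0 z0 x0' z0' where "x0 = e div p" "z0 = e mod p" "x0' = e' div p" "z0' = e' mod p"
  have xz: "e = x0 * p + z0" "x0 < p" "z0 < p" "e' = x0' * p + z0'" "x0' < p" "z0' < p"
    using decomp_idx[OF p1 e] decomp_idx[OF p1 e'] by (auto simp: x0_z0_x0'_z0'_def)
  let ?s = "complex_of_real (sqrt (P x0 z0))" and ?s' = "complex_of_real (sqrt (P x0' z0'))"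
  have "ptrace_first p (p * p) (orthmat (p * (p * p)) {..<p} (\<lambda>_. complex_of_real (1 / real p)) (aev p P)) $$ (e, e')
      = (\<Sum>a<p. \<Sum>k<p. complex_of_real (1 / real p) * aev p P k (a * (p * p) + e) * cnj (aev p P k (a * (p * p) + e')))"
    using e e' by (simp add: ptrace_first_def orthmat_index idx_lt)
  also have "\<dots> = (\<Sum>a<p. \<Sum>k<p. (complex_of_real (1 / real p) * ?s * cnj ?s') * (Wop p x0 z0 $$ (a, k) * cnj (Wop p x0' z0' $$ (a, k))))"
  proof (intro sum.cong refl)
    fix a k assume "a \<in> {..<p}"
    then have a: "a < p" by simp
    have ai: "(a * (p * p) + e) div (p * p) = a" "(a * (p * p) + e) mod (p * p) div p = x0" "(a * (p * p) + e) mod p = z0"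
      "(a * (p * p) + e') div (p * p) = a" "(a * (p * p) + e') mod (p * p) div p = x0'" "(a * (p * p) + e') mod p = z0'"
      using e e' by (simp_all add: x0_z0_x0'_z0'_def mod_mult2_eq' mod_mod_cancel dm_pp_div dm_pp_mod)
    show "complex_of_real (1 / real p) * aev p P k (a * (p * p) + e) * cnj (aev p P k (a * (p * p) + e'))
        = (complex_of_real (1 / real p) * ?s * cnj ?s') * (Wop p x0 z0 $$ (a, k) * cnj (Wop p x0' z0' $$ (a, k)))"
      unfolding aev_def ai by (simp only: complex_cnj_mult mult_ac)
  qed
  also have "\<dots> = (complex_of_real (1 / real p) * ?s * cnj ?s') * (\<Sum>a<p. \<Sum>k<p. Wop p x0 z0 $$ (a, k) * cnj (Wop p x0' z0' $$ (a, k)))"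
    by (simp add: sum_distrib_left)
  also have "\<dots> = (complex_of_real (1 / real p) * ?s * cnj ?s') * (if x0 = x0' \<and> z0 = z0' then of_nat p else 0)"
    using xz by (simp add: W_hs_orth[OF p1])
  also have "\<dots> = (if e = e' then complex_of_real (P (e div p) (e mod p)) else 0)"
  proof (cases "x0 = x0' \<and> z0 = z0'")
    case True
    then have ee: "e = e'" using xz by simp
    have "?s * cnj ?s' = complex_of_real (P x0 z0)" using True P0 xz by (simp flip: of_real_mult)
    then show ?thesis using True ee p0_c by (simp add: x0_z0_x0'_z0'_def)
  next
    case False
    have "e \<noteq> e'"
    proof
      assume "e = e'"
      then have "x0 = x0' \<and> z0 = z0'" by (simp add: x0_z0_x0'_z0'_def)
      with False show False by simp
    qed
    then show ?thesis using False by auto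
  qed
  also have "\<dots> = orthmat (p * p) {..<p * p} (\<lambda>e. complex_of_real (P (e div p) (e mod p))) estd $$ (e, e')"
    using e e' by (simp add: orthmat_estd_index)
  finally show "ptrace_first p (p * p) (orthmat (p * (p * p)) {..<p} (\<lambda>_. complex_of_real (1 / real p)) (aev p P)) $$ (e, e')
      = orthmat (p * p) {..<p * p} (\<lambda>e. complex_of_real (P (e div p) (e mod p))) estd $$ (e, e')" .
qed (auto simp: ptrace_first_def)

end





lemma vN_orthmat:
  assumes fin: "finite K" and on: "orthonormal n K v"
  shows "vN_entropy (orthmat n K (\<lambda>k. complex_of_real (lam k)) v) = (\<Sum>k\<in>K. - (lam k * log 2 (lam k)))"
proof -
  have "mat_fun (\<lambda>x. - (x * log 2 x)) (orthmat n K (\<lambda>k. complex_of_real (lam k)) v)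
      = orthmat n K (\<lambda>k. complex_of_real (- (lam k * log 2 (lam k)))) v"
    by (rule mat_fun_orthmat[OF fin on]) simp
  then show ?thesis by (simp add: vN_entropy_def orthmat_trace[OF on])
qed

lemma kron_I_diag:
  assumes n: "0 < n"
  shows "kron (1\<^sub>m m) (orthmat n {..<n} (\<lambda>e. complex_of_real (d e)) estd)
       = orthmat (m * n) {..<m * n} (\<lambda>i. complex_of_real (d (i mod n))) estd"
proof (rule eq_matI)
  fix i j assume "i < dim_row (orthmat (m * n) {..<m * n} (\<lambda>i. complex_of_real (d (i mod n))) estd)"
    "j < dim_col (orthmat (m * n) {..<m * n} (\<lambda>i. complex_of_real (d (i mod n))) estd)"
  then have i: "i < m * n" and j: "j < m * n" by auto
  have im: "i div n < m" "j div n < m" using i j by (auto simp: less_mult_imp_div_less)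
  have ij: "i = j \<longleftrightarrow> i div n = j div n \<and> i mod n = j mod n"
    by (metis div_mult_mod_eq)
  show "kron (1\<^sub>m m) (orthmat n {..<n} (\<lambda>e. complex_of_real (d e)) estd) $$ (i, j) =
        orthmat (m * n) {..<m * n} (\<lambda>i. complex_of_real (d (i mod n))) estd $$ (i, j)"
    using i j im n by (auto simp: kron_def orthmat_estd_index ij)
qed (auto simp: kron_def)

lemma diag_const: "orthmat n {..<n} (\<lambda>_. c) estd = c \<cdot>\<^sub>m 1\<^sub>m n"
  by (rule eq_matI) (auto simp: orthmat_estd_index)

lemma smult_orthmat: "c \<cdot>\<^sub>m orthmat n K a v = orthmat n K (\<lambda>k. c * a k) v"
  by (rule eq_matI) (auto simp: orthmat_index sum_distrib_left mult_ac)

lemma diag_left: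
  assumes "M \<in> carrier_mat n n" "i < n" "j < n"
  shows "(orthmat n {..<n} (\<lambda>i. complex_of_real (d i)) estd * M) $$ (i, j) = complex_of_real (d i) * M $$ (i, j)"
proof -
  have "(orthmat n {..<n} (\<lambda>i. complex_of_real (d i)) estd * M) $$ (i, j)
      = (\<Sum>r<n. (if i = r then complex_of_real (d i) else 0) * M $$ (r, j))"
    using assms by (subst mult_entry[of _ n n _ n]) (auto simp: orthmat_estd_index intro!: sum.cong)
  also have "\<dots> = complex_of_real (d i) * M $$ (i, j)" using assms by (simp add: ifz_l sum.delta)
  finally show ?thesis .
qed

lemma diag_right:
  assumes "M \<in> carrier_mat n n" "i < n" "j < n"
  shows "(M * orthmat n {..<n} (\<lambda>i. complex_of_real (d i)) estd) $$ (i, j) = M $$ (i, j) * complex_of_real (d j)"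
proof -
  have "(M * orthmat n {..<n} (\<lambda>i. complex_of_real (d i)) estd) $$ (i, j)
      = (\<Sum>r<n. M $$ (i, r) * (if r = j then complex_of_real (d r) else 0))"
    using assms by (subst mult_entry[of _ n n _ n]) (auto simp: orthmat_estd_index intro!: sum.cong)
  also have "\<dots> = M $$ (i, j) * complex_of_real (d j)" using assms by (simp add: ifz_r sum.delta)
  finally show ?thesis .
qed

lemma diag_sandwich:
  "orthmat n {..<n} (\<lambda>i. complex_of_real (d i)) estd * orthmat n K c v * orthmat n {..<n} (\<lambda>i. complex_of_real (d i)) estd
   = orthmat n K c (\<lambda>k i. complex_of_real (d i) * v k i)"
proof (rule eq_matI)
  fix i j assume "i < dim_row (orthmat n K c (\<lambda>k i. complex_of_real (d i) * v k i))"
    "j < dim_col (orthmat n K c (\<lambda>k i. complex_of_real (d i) * v k i))"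
  then have i: "i < n" and j: "j < n" by auto
  have DM: "orthmat n {..<n} (\<lambda>i. complex_of_real (d i)) estd * orthmat n K c v \<in> carrier_mat n n"
    by (rule mult_carrier_mat) auto
  have "(orthmat n {..<n} (\<lambda>i. complex_of_real (d i)) estd * orthmat n K c v * orthmat n {..<n} (\<lambda>i. complex_of_real (d i)) estd) $$ (i, j)
      = complex_of_real (d i) * orthmat n K c v $$ (i, j) * complex_of_real (d j)"
    by (simp only: diag_right[OF DM i j] diag_left[OF orthmat_carrier i j])
  also have "\<dots> = orthmat n K c (\<lambda>k i. complex_of_real (d i) * v k i) $$ (i, j)"
    using i j by (simp add: orthmat_index sum_distrib_left sum_distrib_right mult_ac)
  finally show "(orthmat n {..<n} (\<lambda>i. complex_of_real (d i)) estd * orthmat n K c v * orthmat n {..<n} (\<lambda>i. complex_of_real (d i)) estd) $$ (i, j)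
      = orthmat n K c (\<lambda>k i. complex_of_real (d i) * v k i) $$ (i, j)" .
qed auto


lemma case_prod_ofreal: "(\<lambda>(\<alpha>, \<beta>). complex_of_real (f \<alpha> \<beta>)) = (\<lambda>k. complex_of_real (case k of (\<alpha>, \<beta>) \<Rightarrow> f \<alpha> \<beta>))"
  by (rule ext) (simp split: prod.split)

lemma sum_prod_case: "(\<Sum>k\<in>A \<times> B. h (case k of (x, y) \<Rightarrow> c x y)) = (\<Sum>x\<in>A. \<Sum>y\<in>B. h (c x y))"
  by (simp only: sum.cartesian_product split_def)

lemma vN_uniform: "0 < p \<Longrightarrow> (\<Sum>k<p. - (1 / real p * log 2 (1 / real p))) = log 2 (real p)"
  by (simp add: log_divide)

lemma orthmat_scale_v:
  "orthmat n K c (\<lambda>k i. complex_of_real r * v k i) = orthmat n K (\<lambda>k. complex_of_real (r * r) * c k) v"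
  by (rule eq_matI) (auto simp: orthmat_index intro!: sum.cong)

lemma pos_sum_powr:
  fixes f :: "'k \<Rightarrow> real"
  assumes fin: "finite K" and nn: "\<And>k. k \<in> K \<Longrightarrow> 0 \<le> f k" and s1: "sum f K = 1"
  shows "0 < (\<Sum>k\<in>K. f k powr r)"
proof (rule ccontr)
  assume "\<not> 0 < (\<Sum>k\<in>K. f k powr r)"
  moreover have "0 \<le> (\<Sum>k\<in>K. f k powr r)" by (simp add: sum_nonneg)
  ultimately have "(\<Sum>k\<in>K. f k powr r) = 0" by linarith
  then have "\<forall>k\<in>K. f k powr r = 0" using fin by (simp add: sum_nonneg_eq_0_iff)
  then have "\<forall>k\<in>K. f k = 0" by simp
  then have "sum f K = 0" by simp
  then show False using s1 by simp
qed

lemma aux_two: "x \<noteq> 0 \<Longrightarrow> 2 * (t / (2 * x)) = t / (x::real)"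
  by (simp add: field_simps)

lemma aux_three: "1 + t \<noteq> 0 \<Longrightarrow> 1 - t / (1 + t) = 1 / (1 + (t::real))"
  by (simp add: field_simps)

lemma mult_vec_entry: "i < dim_row A \<Longrightarrow> v \<in> carrier_vec (dim_col A) \<Longrightarrow> (A *\<^sub>v v) $ i = (\<Sum>j<dim_col A. A $$ (i, j) * v $ j)"
  by (auto simp: scalar_prod_def atLeast0LessThan intro!: sum.cong)

lemma diag_mult_vec:
  assumes "i < n" "v \<in> carrier_vec n"
  shows "(orthmat n {..<n} (\<lambda>i. complex_of_real (d i)) estd *\<^sub>v v) $ i = complex_of_real (d i) * v $ i"
proof -
  have "(orthmat n {..<n} (\<lambda>i. complex_of_real (d i)) estd *\<^sub>v v) $ i = (\<Sum>j<n. (if i = j then complex_of_real (d i) else 0) * v $ j)"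
    using assms by (subst mult_vec_entry) (auto simp: orthmat_estd_index intro!: sum.cong)
  also have "\<dots> = complex_of_real (d i) * v $ i" using assms by (simp add: ifz_l sum.delta)
  finally show ?thesis .
qed

lemma diag_density:
  assumes nn: "\<And>i. i < n \<Longrightarrow> 0 \<le> d i" and s1: "(\<Sum>i<n. d i) = 1"
  shows "density_op n (orthmat n {..<n} (\<lambda>i. complex_of_real (d i)) estd)"
proof -
  let ?S = "orthmat n {..<n} (\<lambda>i. complex_of_real (d i)) estd"
  have h: "hermitian ?S" unfolding hermitian_def by (auto intro: orthmat_adj)
  have q: "0 \<le> Re (\<Sum>i<n. cnj (v $ i) * (?S *\<^sub>v v) $ i)" if v: "v \<in> carrier_vec n" for v
  proof -
    have "(\<Sum>i<n. cnj (v $ i) * (?S *\<^sub>v v) $ i) = (\<Sum>i<n. complex_of_real (d i * (cmod (v $ i))^2))"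
    proof (rule sum.cong[OF refl])
      fix i assume "i \<in> {..<n}"
      then have i: "i < n" by simp
      show "cnj (v $ i) * (?S *\<^sub>v v) $ i = complex_of_real (d i * (cmod (v $ i))^2)"
        by (subst diag_mult_vec[OF i v]) (simp only: mult.left_commute[of "cnj (v $ i)"] cnj_mult_self of_real_mult)
    qed
    then have "Re (\<Sum>i<n. cnj (v $ i) * (?S *\<^sub>v v) $ i) = (\<Sum>i<n. d i * (cmod (v $ i))^2)" by (simp add: Re_sum)
    also have "\<dots> \<ge> 0" using nn by (intro sum_nonneg) auto
    finally show ?thesis .
  qed
  have tr: "mtrace ?S = 1" using orthmat_trace[OF estd_orth, of n "\<lambda>i. complex_of_real (d i)"] s1
    by (simp flip: of_real_sum)
  show ?thesis using h q tr by (auto simp: density_op_def psd_def)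
qed

context
  fixes p :: nat
  assumes p1: "1 < p"
begin

private lemma p0_d: "0 < p" using p1 by simp

lemma ent_AB:
  assumes P: "prob_dist p P" and Pt: "prob_dist p Pt"
  shows "cond_entropy p p (ptrace_second (p * p) (p * p) (omega_ABE p P Pt)) = shannon p (conv p Pt P) - log 2 (real p)"
proof -
  have P0: "\<forall>x<p. \<forall>z<p. 0 \<le> P x z" using P by (simp add: prob_dist_def)
  have AB: "ptrace_second (p * p) (p * p) (omega_ABE p P Pt)
     = orthmat (p * p) ({..<p} \<times> {..<p}) (\<lambda>k. complex_of_real (case k of (\<alpha>, \<beta>) \<Rightarrow> conv p Pt P \<alpha> \<beta>)) (bellv p)"
    using omAB_orthmat[OF p1 P0, of Pt] by (simp only: case_prod_ofreal)
  have B: "ptrace_first p p (ptrace_second (p * p) (p * p) (omega_ABE p P Pt)) = orthmat p {..<p} (\<lambda>_. complex_of_real (1 / real p)) estd"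
    using omAB_orthmat[OF p1 P0, of Pt] omB_orthmat[OF p1 P Pt] by simp
  have "vN_entropy (ptrace_second (p * p) (p * p) (omega_ABE p P Pt))
      = (\<Sum>k\<in>{..<p} \<times> {..<p}. - ((case k of (\<alpha>, \<beta>) \<Rightarrow> conv p Pt P \<alpha> \<beta>) * log 2 (case k of (\<alpha>, \<beta>) \<Rightarrow> conv p Pt P \<alpha> \<beta>)))"
    unfolding AB by (rule vN_orthmat[OF _ bell_orth[OF p1]]) simp
  also have "\<dots> = shannon p (conv p Pt P)"
    by (simp add: shannon_def sum_negf sum_prod_case[where h="\<lambda>c. c * log 2 c"])
  finally have e1: "vN_entropy (ptrace_second (p * p) (p * p) (omega_ABE p P Pt)) = shannon p (conv p Pt P)" .
  have "vN_entropy (ptrace_first p p (ptrace_second (p * p) (p * p) (omega_ABE p P Pt))) = (\<Sum>k<p. - (1 / real p * log 2 (1 / real p)))"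
    unfolding B by (rule vN_orthmat[OF _ estd_orth]) simp
  also have "\<dots> = log 2 (real p)" using p0_d by (rule vN_uniform)
  finally have e2: "vN_entropy (ptrace_first p p (ptrace_second (p * p) (p * p) (omega_ABE p P Pt))) = log 2 (real p)" .
  show ?thesis using e1 e2 by (simp add: cond_entropy_def)
qed

lemma ent_AE:
  assumes P: "prob_dist p P" and Pt: "prob_dist p Pt"
  shows "cond_entropy p (p * p) (ptrace_mid p p (p * p) (omega_ABE p P Pt)) = log 2 (real p) - shannon p P"
proof -
  have P0: "\<forall>x<p. \<forall>z<p. 0 \<le> P x z" using P by (simp add: prob_dist_def)
  have AE: "ptrace_mid p p (p * p) (omega_ABE p P Pt) = orthmat (p * (p * p)) {..<p} (\<lambda>_. complex_of_real (1 / real p)) (aev p P)"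
    by (rule omAE_orthmat[OF p1 P0 Pt])
  have E: "ptrace_first p (p * p) (ptrace_mid p p (p * p) (omega_ABE p P Pt)) = orthmat (p * p) {..<p * p} (\<lambda>e. complex_of_real (P (e div p) (e mod p))) estd"
    unfolding AE by (rule omE_orthmat[OF p1 P0])
  have "vN_entropy (ptrace_mid p p (p * p) (omega_ABE p P Pt)) = (\<Sum>k<p. - (1 / real p * log 2 (1 / real p)))"
    unfolding AE by (rule vN_orthmat[OF _ aev_orth[OF p1 P]]) simp
  also have "\<dots> = log 2 (real p)" using p0_d by (rule vN_uniform)
  finally have e1: "vN_entropy (ptrace_mid p p (p * p) (omega_ABE p P Pt)) = log 2 (real p)" .
  have "vN_entropy (ptrace_first p (p * p) (ptrace_mid p p (p * p) (omega_ABE p P Pt)))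
      = (\<Sum>e<p * p. - (P (e div p) (e mod p) * log 2 (P (e div p) (e mod p))))"
    unfolding E by (rule vN_orthmat[OF _ estd_orth]) simp
  also have "\<dots> = (\<Sum>x<p. \<Sum>z<p. - (P ((x * p + z) div p) ((x * p + z) mod p) * log 2 (P ((x * p + z) div p) ((x * p + z) mod p))))"
    by (rule sum_split)
  also have "\<dots> = shannon p P"
    by (simp add: shannon_def sum_negf)
  finally have e2: "vN_entropy (ptrace_first p (p * p) (ptrace_mid p p (p * p) (omega_ABE p P Pt))) = shannon p P" .
  show ?thesis using e1 e2 by (simp add: cond_entropy_def)
qed

lemma conv_nonneg:
  assumes P: "prob_dist p P" and Pt: "prob_dist p Pt"
  shows "0 \<le> conv p Pt P \<alpha> \<beta>"
  using P Pt p0_d unfolding conv_def prob_dist_def by (intro sum_nonneg mult_nonneg_nonneg) auto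

lemma renyi_AB:
  assumes P: "prob_dist p P" and Pt: "prob_dist p Pt" and t: "0 < t" "t < 1"
  shows "cond_renyi_down (- t) p p (ptrace_second (p * p) (p * p) (omega_ABE p P Pt))
       = ereal (renyi p (1 - t) (conv p Pt P) - log 2 (real p))"
proof -
  define s where "s = - t"
  define a where "a = s / (2 * (1 + s))"
  define cv where "cv k = (case k of (\<alpha>, \<beta>) \<Rightarrow> conv p Pt P \<alpha> \<beta>)" for k
  define KK where "KK = {..<p} \<times> {..<p}"
  define r where "r = (1 / real p) powr (- a)"
  have P0: "\<forall>x<p. \<forall>z<p. 0 \<le> P x z" using P by (simp add: prob_dist_def)
  have cv0: "0 \<le> cv k" for k using conv_nonneg[OF P Pt] by (simp add: cv_def split: prod.split)
  have AB: "ptrace_second (p * p) (p * p) (omega_ABE p P Pt) = orthmat (p * p) KK (\<lambda>k. complex_of_real (cv k)) (bellv p)"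
    using omAB_orthmat[OF p1 P0, of Pt] by (simp only: case_prod_ofreal cv_def KK_def)
  have B: "ptrace_first p p (ptrace_second (p * p) (p * p) (omega_ABE p P Pt)) = orthmat p {..<p} (\<lambda>_. complex_of_real (1 / real p)) estd"
    using omAB_orthmat[OF p1 P0, of Pt] omB_orthmat[OF p1 P Pt] by simp
  have kB: "kron (1\<^sub>m p) (orthmat p {..<p} (\<lambda>_. complex_of_real (1 / real p)) estd) = orthmat (p * p) {..<p * p} (\<lambda>_. complex_of_real (1 / real p)) estd"
    using kron_I_diag[OF p0_d, of p "\<lambda>_. 1 / real p"] by simp
  have S: "mat_fun (\<lambda>x. x powr (- a)) (orthmat (p * p) {..<p * p} (\<lambda>_. complex_of_real (1 / real p)) estd)
      = orthmat (p * p) {..<p * p} (\<lambda>_. complex_of_real r) estd"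
    using mat_fun_orthmat[OF _ estd_orth, where f="\<lambda>x. x powr (- a)" and lam="\<lambda>_. 1 / real p" and n="p * p"] by (simp add: r_def)
  have SrS: "orthmat (p * p) {..<p * p} (\<lambda>_. complex_of_real r) estd * orthmat (p * p) KK (\<lambda>k. complex_of_real (cv k)) (bellv p) *
        orthmat (p * p) {..<p * p} (\<lambda>_. complex_of_real r) estd = orthmat (p * p) KK (\<lambda>k. complex_of_real (r * r * cv k)) (bellv p)"
    using diag_sandwich[of "p * p" "\<lambda>_. r" KK "\<lambda>k. complex_of_real (cv k)" "bellv p"]
    by (simp add: orthmat_scale_v mult.assoc)
  have F: "mat_fun (\<lambda>x. x powr (1 + s)) (orthmat (p * p) KK (\<lambda>k. complex_of_real (r * r * cv k)) (bellv p))
      = orthmat (p * p) KK (\<lambda>k. complex_of_real ((r * r * cv k) powr (1 + s))) (bellv p)"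
    by (rule mat_fun_orthmat[OF _ bell_orth[OF p1, folded KK_def]]) (auto simp: KK_def)
  define Q where "Q = Re (mtrace (orthmat (p * p) KK (\<lambda>k. complex_of_real ((r * r * cv k) powr (1 + s))) (bellv p)))"
  define Z where "Z = (\<Sum>k\<in>KK. cv k powr (1 + s))"
  have r0: "0 < r" using p0_d by (simp add: r_def)
  have rr: "(r * r) powr (1 + s) = real p powr s"
  proof -
    have "r = real p powr a" using p0_d by (simp add: r_def powr_minus_divide powr_divide)
    then have "(r * r) powr (1 + s) = real p powr (2 * a * (1 + s))"
      using p0_d by (simp add: powr_powr powr_add[symmetric] flip: powr_mult)
    also have "2 * a * (1 + s) = s" using t by (simp add: a_def s_def field_simps)
    finally show ?thesis .
  qed
  have Qv: "Q = real p powr s * Z"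
  proof -
    have "Q = (\<Sum>k\<in>KK. (r * r * cv k) powr (1 + s))"
      unfolding Q_def by (simp add: orthmat_trace[OF bell_orth[OF p1, folded KK_def]] Re_sum)
    also have "\<dots> = (\<Sum>k\<in>KK. (r * r) powr (1 + s) * cv k powr (1 + s))"
      using r0 cv0 by (intro sum.cong refl) (simp add: powr_mult)
    finally show ?thesis by (simp add: rr Z_def sum_distrib_left)
  qed
  have Z0: "0 < Z" unfolding Z_def
    by (rule pos_sum_powr) (use cv0 conv_sum[OF p1 P Pt] in \<open>auto simp: KK_def cv_def sum_prod_case[where h="\<lambda>x. x"]\<close>)
  have Q0: "Q \<noteq> 0" using Qv Z0 p0_d by simp
  have lQ: "(1 / s) * log 2 Q = log 2 (real p) + (1 / s) * log 2 Z"
    using Qv Z0 p0_d t by (simp add: log_mult log_powr s_def field_simps)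
  have sd: "sand_div s (ptrace_second (p * p) (p * p) (omega_ABE p P Pt)) (kron (1\<^sub>m p) (ptrace_first p p (ptrace_second (p * p) (p * p) (omega_ABE p P Pt))))
      = ereal (log 2 (real p) + (1 / s) * log 2 Z)"
    unfolding sand_div_def Let_def B kB a_def[symmetric] unfolding S unfolding AB SrS unfolding F Q_def[symmetric] using Q0 lQ t by (simp add: s_def)
  have Zr: "renyi p (1 - t) (conv p Pt P) = (1 / t) * log 2 Z"
    by (simp add: renyi_def Z_def KK_def cv_def s_def sum_prod_case[where h="\<lambda>x. x powr (1 - t)"])
  show ?thesis
    unfolding cond_renyi_down_def s_def[symmetric] sd Zr using t by (simp add: s_def)
qed

lemma aev_gram:
  assumes P: "prob_dist p P" and k: "k < p" and k': "k' < p"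
  shows "(\<Sum>i<p * (p * p). cnj (complex_of_real (h (P (i mod (p * p) div p) (i mod p))) * aev p P k i) *
            (complex_of_real (h (P (i mod (p * p) div p) (i mod p))) * aev p P k' i))
       = complex_of_real (\<Sum>x<p. \<Sum>z<p. h (P x z) * h (P x z) * P x z) * (if k = k' then 1 else 0)"
proof -
  have P0: "\<forall>x<p. \<forall>z<p. 0 \<le> P x z" using P by (simp add: prob_dist_def)
  let ?g = "\<lambda>x0 z0. h (P x0 z0) * h (P x0 z0) * P x0 z0"
  have "(\<Sum>i<p * (p * p). cnj (complex_of_real (h (P (i mod (p * p) div p) (i mod p))) * aev p P k i) *
            (complex_of_real (h (P (i mod (p * p) div p) (i mod p))) * aev p P k' i))
      = (\<Sum>a<p. \<Sum>e<p * p. cnj (complex_of_real (h (P ((a * (p * p) + e) mod (p * p) div p) ((a * (p * p) + e) mod p))) * aev p P k (a * (p * p) + e)) *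
            (complex_of_real (h (P ((a * (p * p) + e) mod (p * p) div p) ((a * (p * p) + e) mod p))) * aev p P k' (a * (p * p) + e)))"
    by (rule sum_split)
  also have "\<dots> = (\<Sum>a<p. \<Sum>x0<p. \<Sum>z0<p. cnj (complex_of_real (h (P ((a * (p * p) + (x0 * p + z0)) mod (p * p) div p) ((a * (p * p) + (x0 * p + z0)) mod p))) * aev p P k (a * (p * p) + (x0 * p + z0))) *
            (complex_of_real (h (P ((a * (p * p) + (x0 * p + z0)) mod (p * p) div p) ((a * (p * p) + (x0 * p + z0)) mod p))) * aev p P k' (a * (p * p) + (x0 * p + z0))))"
    by (rule sum.cong[OF refl], rule sum_split)
  also have "\<dots> = (\<Sum>a<p. \<Sum>x0<p. \<Sum>z0<p. complex_of_real (?g x0 z0) * (Wop p x0 z0 $$ (a, k') * cnj (Wop p x0 z0 $$ (a, k))))"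
  proof (intro sum.cong refl)
    fix a x0 z0 assume "a \<in> {..<p}" "x0 \<in> {..<p}" "z0 \<in> {..<p}"
    then have a: "a < p" and x0: "x0 < p" and z0: "z0 < p" by auto
    have e: "x0 * p + z0 < p * p" using idx_lt[OF x0 z0] .
    have ai: "(a * (p * p) + (x0 * p + z0)) div (p * p) = a" "(a * (p * p) + (x0 * p + z0)) mod (p * p) div p = x0"
      "(a * (p * p) + (x0 * p + z0)) mod p = z0"
      using e x0 z0 by (simp_all add: mod_mult2_eq' mod_mod_cancel dm_pp_div dm_pp_mod)
    have sq: "cnj (complex_of_real (sqrt (P x0 z0))) * complex_of_real (sqrt (P x0 z0)) = complex_of_real (P x0 z0)"
      using P0 x0 z0 by (simp flip: of_real_mult)
    show "cnj (complex_of_real (h (P ((a * (p * p) + (x0 * p + z0)) mod (p * p) div p) ((a * (p * p) + (x0 * p + z0)) mod p))) * aev p P k (a * (p * p) + (x0 * p + z0))) *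
            (complex_of_real (h (P ((a * (p * p) + (x0 * p + z0)) mod (p * p) div p) ((a * (p * p) + (x0 * p + z0)) mod p))) * aev p P k' (a * (p * p) + (x0 * p + z0)))
        = complex_of_real (?g x0 z0) * (Wop p x0 z0 $$ (a, k') * cnj (Wop p x0 z0 $$ (a, k)))"
      unfolding aev_def ai of_real_mult sq[symmetric] by (simp only: complex_cnj_mult complex_cnj_complex_of_real mult_ac)
  qed
  also have "\<dots> = (\<Sum>x0<p. \<Sum>z0<p. \<Sum>a<p. complex_of_real (?g x0 z0) * (Wop p x0 z0 $$ (a, k') * cnj (Wop p x0 z0 $$ (a, k))))"
    by (rule swap3)
  also have "\<dots> = (\<Sum>x0<p. \<Sum>z0<p. complex_of_real (?g x0 z0) * (if k' = k then 1 else 0))"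
    using k k' by (intro sum.cong refl) (simp add: sum_distrib_left[symmetric] W_col_orth[OF p1])
  also have "\<dots> = complex_of_real (\<Sum>x<p. \<Sum>z<p. ?g x z) * (if k = k' then 1 else 0)"
    by (simp add: sum_distrib_right)
  finally show ?thesis .
qed

lemma supp_AE:
  assumes P0: "\<forall>x<p. \<forall>z<p. 0 \<le> P x z"
  shows "supp_le (orthmat (p * (p * p)) {..<p} c (aev p P))
           (orthmat (p * (p * p)) {..<p * (p * p)} (\<lambda>i. complex_of_real (P (i mod (p * p) div p) (i mod p))) estd)"
  unfolding supp_le_def
proof (intro ballI impI)
  let ?N = "p * (p * p)"
  let ?D = "\<lambda>i. P (i mod (p * p) div p) (i mod p)"
  fix v assume v: "v \<in> carrier_vec (dim_row (orthmat ?N {..<?N} (\<lambda>i. complex_of_real (?D i)) estd))"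
    and z: "orthmat ?N {..<?N} (\<lambda>i. complex_of_real (?D i)) estd *\<^sub>v v = 0\<^sub>v (dim_row (orthmat ?N {..<?N} (\<lambda>i. complex_of_real (?D i)) estd))"
  then have vc: "v \<in> carrier_vec ?N" by simp
  have Dv: "complex_of_real (?D j) * v $ j = 0" if j: "j < ?N" for j
  proof -
    have "(orthmat ?N {..<?N} (\<lambda>i. complex_of_real (?D i)) estd *\<^sub>v v) $ j = 0" using z j by simp
    then show ?thesis by (simp only: diag_mult_vec[OF j vc])
  qed
  have sv: "complex_of_real (sqrt (?D j)) * v $ j = 0" if j: "j < ?N" for j
    using Dv[OF j] by auto
  show "orthmat ?N {..<p} c (aev p P) *\<^sub>v v = 0\<^sub>v (dim_row (orthmat ?N {..<p} c (aev p P)))"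
  proof (rule eq_vecI)
    fix i assume "i < dim_vec (0\<^sub>v (dim_row (orthmat ?N {..<p} c (aev p P))))"
    then have i: "i < ?N" by simp
    have "(orthmat ?N {..<p} c (aev p P) *\<^sub>v v) $ i = (\<Sum>j<?N. orthmat ?N {..<p} c (aev p P) $$ (i, j) * v $ j)"
      using i vc by (subst mult_vec_entry) auto
    also have "\<dots> = (\<Sum>j<?N. \<Sum>k<p. c k * aev p P k i * cnj (Wop p (j mod (p * p) div p) (j mod p) $$ (j div (p * p), k)) *
                       (complex_of_real (sqrt (?D j)) * v $ j))"
      using i by (intro sum.cong refl) (simp add: orthmat_index aev_def sum_distrib_right sum_distrib_left mult_ac)
    also have "\<dots> = 0" using sv by (intro sum.neutral ballI) simp
    finally show "(orthmat ?N {..<p} c (aev p P) *\<^sub>v v) $ i = 0\<^sub>v (dim_row (orthmat ?N {..<p} c (aev p P))) $ i"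
      using i by simp
  qed simp
qed

lemma renyi_AE:
  assumes P: "prob_dist p P" and Pt: "prob_dist p Pt" and t: "0 < t" "t < 1"
  shows "ereal (log 2 (real p) - renyi p (1 / (1 + t)) P) \<le> cond_renyi_up t p (p * p) (ptrace_mid p p (p * p) (omega_ABE p P Pt))"
proof -
  define N where "N = p * (p * p)"
  define D where "D i = P (i mod (p * p) div p) (i mod p)" for i
  define a where "a = t / (2 * (1 + t))"
  define Z where "Z = (\<Sum>x<p. \<Sum>z<p. P x z powr (1 / (1 + t)))"
  define \<sigma>0 where "\<sigma>0 = orthmat (p * p) {..<p * p} (\<lambda>e. complex_of_real (P (e div p) (e mod p))) estd"
  have P0: "\<forall>x<p. \<forall>z<p. 0 \<le> P x z" using P by (simp add: prob_dist_def)
  have D0: "0 \<le> D i" for i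
  proof -
    have "i mod (p * p) < p * p" using p0_d by simp
    then have "i mod (p * p) div p < p" by (simp add: less_mult_imp_div_less)
    then show ?thesis using P0 p0_d by (simp add: D_def)
  qed
  have AE: "ptrace_mid p p (p * p) (omega_ABE p P Pt) = orthmat N {..<p} (\<lambda>_. complex_of_real (1 / real p)) (aev p P)"
    unfolding N_def by (rule omAE_orthmat[OF p1 P0 Pt])
  have dens: "density_op (p * p) \<sigma>0" unfolding \<sigma>0_def
  proof (rule diag_density)
    show "0 \<le> P (i div p) (i mod p)" if "i < p * p" for i
      using P0 that p0_d by (simp add: less_mult_imp_div_less)
    have "(\<Sum>i<p * p. P (i div p) (i mod p)) = (\<Sum>x<p. \<Sum>z<p. P ((x * p + z) div p) ((x * p + z) mod p))"
      by (rule sum_split)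
    also have "\<dots> = 1" using P by (simp add: prob_dist_def)
    finally show "(\<Sum>i<p * p. P (i div p) (i mod p)) = 1" .
  qed
  have mm: "i mod (p * p) mod p = i mod p" for i by (simp add: mod_mod_cancel)
  have k\<sigma>: "kron (1\<^sub>m p) \<sigma>0 = orthmat N {..<N} (\<lambda>i. complex_of_real (D i)) estd"
    using kron_I_diag[of "p * p" p "\<lambda>e. P (e div p) (e mod p)"] p0_d
    by (simp add: \<sigma>0_def N_def D_def mm)
  have S: "mat_fun (\<lambda>x. x powr (- a)) (orthmat N {..<N} (\<lambda>i. complex_of_real (D i)) estd)
      = orthmat N {..<N} (\<lambda>i. complex_of_real (D i powr (- a))) estd"
    by (rule mat_fun_orthmat[OF _ estd_orth]) simp_all
  define w where "w k i = complex_of_real (D i powr (- a)) * aev p P k i" for k i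
  have SrS: "orthmat N {..<N} (\<lambda>i. complex_of_real (D i powr (- a))) estd * orthmat N {..<p} (\<lambda>_. complex_of_real (1 / real p)) (aev p P) *
      orthmat N {..<N} (\<lambda>i. complex_of_real (D i powr (- a))) estd = orthmat N {..<p} (\<lambda>_. complex_of_real (1 / real p)) w"
    unfolding w_def by (rule diag_sandwich)
  have g: "y powr (- a) * y powr (- a) * y = y powr (1 / (1 + t))" if y: "0 \<le> y" for y
  proof (cases "y = 0")
    case False
    have "y powr (- a) * y powr (- a) * y = y powr (- a) * y powr (- a) * y powr 1" using y by simp
    also have "\<dots> = y powr (- a + - a + 1)" by (simp only: powr_add[symmetric])
    also have "- a + - a + 1 = 1 / (1 + t)"
    proof -
      have h1: "1 + t \<noteq> 0" using t by simp
      have e2: "2 * a = t / (1 + t)" unfolding a_def using h1 by (rule aux_two)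
      have e3: "1 - t / (1 + t) = 1 / (1 + t)"
        using h1 by (rule aux_three)
      have "- a + - a + 1 = 1 - 2 * a" by simp
      then show ?thesis using e2 e3 by simp
    qed
    finally show ?thesis .
  qed simp
  have Zg: "(\<Sum>x<p. \<Sum>z<p. P x z powr (- a) * P x z powr (- a) * P x z) = Z"
    unfolding Z_def using P0 g by (intro sum.cong refl) auto
  have gram: "(\<Sum>i<N. cnj (w k i) * w k' i) = complex_of_real Z * (if k = k' then 1 else 0)" if "k < p" "k' < p" for k k'
    using aev_gram[OF P that, of "\<lambda>y. y powr (- a)"] unfolding Zg by (simp add: w_def D_def N_def)
  have Z0: "0 < Z"
  proof -
    have "0 < (\<Sum>k\<in>{..<p} \<times> {..<p}. (case k of (x, z) \<Rightarrow> P x z) powr (1 / (1 + t)))"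
      by (rule pos_sum_powr) (use P0 P in \<open>auto simp: prob_dist_def sum_prod_case[where h="\<lambda>x. x"]\<close>)
    then show ?thesis by (simp add: Z_def sum_prod_case[where h="\<lambda>x. x powr (1 / (1 + t))"])
  qed
  define u where "u k i = complex_of_real (1 / sqrt Z) * w k i" for k i
  have wu: "w = (\<lambda>k i. complex_of_real (sqrt Z) * u k i)"
    using Z0 by (auto simp: u_def fun_eq_iff mult.assoc[symmetric] simp flip: of_real_mult)
  have u_orth: "orthonormal N {..<p} u"
    unfolding orthonormal_def
  proof (intro ballI)
    fix k k' assume "k \<in> {..<p}" "k' \<in> {..<p}"
    then have kk: "k < p" "k' < p" by auto
    have "(\<Sum>i<N. cnj (u k i) * u k' i) = complex_of_real (1 / Z) * (\<Sum>i<N. cnj (w k i) * w k' i)"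
      using Z0 by (simp add: u_def sum_distrib_left mult_ac flip: of_real_mult)
    also have "\<dots> = (if k = k' then 1 else 0)" using gram[OF kk] Z0 by simp
    finally show "(\<Sum>i<N. cnj (u k i) * u k' i) = (if k = k' then 1 else 0)" .
  qed
  have WU: "orthmat N {..<p} (\<lambda>_. complex_of_real (1 / real p)) w = orthmat N {..<p} (\<lambda>_. complex_of_real (Z / real p)) u"
    unfolding wu orthmat_scale_v using Z0 by (simp flip: of_real_mult)
  have F: "mat_fun (\<lambda>x. x powr (1 + t)) (orthmat N {..<p} (\<lambda>_. complex_of_real (Z / real p)) u)
      = orthmat N {..<p} (\<lambda>_. complex_of_real ((Z / real p) powr (1 + t))) u"
    by (rule mat_fun_orthmat[OF _ u_orth]) simp_all
  define Q where "Q = Re (mtrace (orthmat N {..<p} (\<lambda>_. complex_of_real ((Z / real p) powr (1 + t))) u))"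
  have Qv: "Q = real p * (Z / real p) powr (1 + t)"
    unfolding Q_def by (simp add: orthmat_trace[OF u_orth])
  have Q0: "Q \<noteq> 0" using Qv Z0 p0_d by simp
  have lQ: "(1 / t) * log 2 Q = renyi p (1 / (1 + t)) P - log 2 (real p)"
  proof -
    have "log 2 Q = log 2 (real p) + (1 + t) * (log 2 Z - log 2 (real p))"
      using Z0 p0_d by (simp add: Qv log_mult log_powr log_divide)
    moreover have "renyi p (1 / (1 + t)) P = ((1 + t) / t) * log 2 Z"
    proof -
      have "1 / (1 + t) - 1 = - t / (1 + t)" using t by (simp add: field_simps)
      then show ?thesis using t by (simp add: renyi_def Z_def field_simps)
    qed
    ultimately show ?thesis using t by (simp add: field_simps)
  qed
  have supp: "supp_le (orthmat N {..<p} (\<lambda>_. complex_of_real (1 / real p)) (aev p P)) (orthmat N {..<N} (\<lambda>i. complex_of_real (D i)) estd)"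
    unfolding N_def D_def by (rule supp_AE[OF P0])
  have sd: "sand_div t (ptrace_mid p p (p * p) (omega_ABE p P Pt)) (kron (1\<^sub>m p) \<sigma>0) = ereal (renyi p (1 / (1 + t)) P - log 2 (real p))"
    unfolding sand_div_def Let_def k\<sigma> a_def[symmetric] unfolding S unfolding AE SrS WU unfolding F Q_def[symmetric]
    using Q0 lQ supp by simp
  have "(INF \<sigma>\<in>{\<sigma>. density_op (p * p) \<sigma>}. sand_div t (ptrace_mid p p (p * p) (omega_ABE p P Pt)) (kron (1\<^sub>m p) \<sigma>))
      \<le> sand_div t (ptrace_mid p p (p * p) (omega_ABE p P Pt)) (kron (1\<^sub>m p) \<sigma>0)"
    by (rule INF_lower) (use dens in simp)
  then have "- sand_div t (ptrace_mid p p (p * p) (omega_ABE p P Pt)) (kron (1\<^sub>m p) \<sigma>0)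
      \<le> cond_renyi_up t p (p * p) (ptrace_mid p p (p * p) (omega_ABE p P Pt))"
    unfolding cond_renyi_up_def by (simp only: ereal_minus_le_minus)
  then show ?thesis unfolding sd by simp
qed

end


theorem lemma1:
  fixes p :: nat and P Pt :: "nat \<Rightarrow> nat \<Rightarrow> real"
  assumes "prime p"
    and "prob_dist p P" and "prob_dist p Pt"
  defines "\<omega> \<equiv> omega_ABE p P Pt"
  defines "\<omega>AB \<equiv> ptrace_second (p * p) (p * p) \<omega>"
  defines "\<omega>AE \<equiv> ptrace_mid p p (p * p) \<omega>"
  shows "cond_entropy p p \<omega>AB = shannon p (conv p Pt P) - log 2 (real p) \<and>
         cond_entropy p (p * p) \<omega>AE = log 2 (real p) - shannon p P \<and>
         (\<forall>t. 0 < t \<and> t < 1 \<longrightarrow>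
           cond_renyi_down (- t) p p \<omega>AB = ereal (renyi p (1 - t) (conv p Pt P) - log 2 (real p))) \<and>
         (\<forall>t. 0 < t \<and> t < 1 \<longrightarrow>
           cond_renyi_up t p (p * p) \<omega>AE \<ge> ereal (log 2 (real p) - renyi p (1 / (1 + t)) P))"
proof -
  have p1: "1 < p" using assms(1) by (rule prime_gt_1_nat)
  have P: "prob_dist p P" and Pt: "prob_dist p Pt" using assms(2,3) .
  show ?thesis
    unfolding \<omega>AB_def \<omega>AE_def \<omega>_def
    using ent_AB[OF p1 P Pt] ent_AE[OF p1 P Pt] renyi_AB[OF p1 P Pt] renyi_AE[OF p1 P Pt]
    by blast
qed


end
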